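(* Let $(D,H,P)$ be a market, and let $(\iota,\kappa)$ be an interview arrangement that is adequate at $P$. Let $\kappa'=(\kappa'_d)_{d\in D}$ be doctor interview capacities such that $\kappa'_d\ge \kappa_d$ for every $d\in D$. Let $\mu$ be the $(\iota,\kappa)$-matching and $\mu'$ the $(\iota,\kappa')$-matching at $P$. Then no doctor prefers $\mu'$ to $\mu$; that is, for every $d\in D$, $\mu(d)\mathrel{R_d}\mu'(d)$ (where $R_d$ is the weak relation associated with $P_d$).
   Context: A market is a triple $(D,H,P)$ where $D$ (doctors) and $H$ (hospitals) are finite sets with $|D|\ge 2$, $|H|\ge 2$; each $h\in H$ has a strict preference $P_h$ over $D\cup\{h\}$ and each $d\in D$ has a strict preference $P_d$ over $H\cup\{d\}$ (being matched to oneself means being unmatched; a partner ranked below oneself is unacceptable). A matching is $\mu:H\cup D\to H\cup D$ with $\mu(h)\in D\cup\{h\}$, $\mu(d)\in H\cup\{d\}$, and $\mu(d)=h$ iff $\mu(h)=d$. A pair $(d,h)$ blocks $\mu$ if $h\mathrel{P_d}\mu(d)$ and $d\mathrel{P_h}\mu(h)$; $\mu$ is stable if it has no blocking pair. An interview arrangement is $(\iota,\kappa)$ with $\iota_h\in\mathbb N$ the interview capacity of each $h\in H$ and $\kappa_d\in\mathbb N$ that of each $d\in D$. An interview matching is a many-to-many matching $\nu$ ($\nu(d)\subseteq H$, $\nu(h)\subseteq D$, $h\in\nu(d)$ iff $d\in\nu(h)$) with $|\nu(d)|\le\kappa_d$ and $|\nu(h)|\le\iota_h$. The $(\iota,\kappa)$-matching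 at $P$ is obtained in two steps. Step 1: $\nu$ is the hospital-optimal pairwise stable interview matching, computed by hospital-proposing deferred acceptance in which each agent's choice function from a set of proposals selects its acceptable partners in that set if there are at most its capacity of them, and otherwise its capacity-many best ones according to its preference (responsive, acceptant choice). Step 2: the final matching is the outcome of doctor-proposing deferred acceptance with each agent's preference restricted to $\nu$ (each agent $i$ ranks only the agents in $\nu(i)$, in the order given by $P_i$ and only if acceptable to $i$; all others are unacceptable). $(\iota,\kappa)$ is adequate at $P$ if the $(\iota,\kappa)$-matching at $P$ is stable with respect to the true preferences $P$. *)

theory Defs
  imports Main
begin

text \<open>A doctor's preference over H \<union> {d} is a relation on 'h option,
  None standing for the doctor herself (being unmatched); 'P x y' means x is strictly
  preferred to y. Likewise for hospitals over 'd option.\<close>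

definition strict_linear_on :: "'a set \<Rightarrow> ('a \<Rightarrow> 'a \<Rightarrow> bool) \<Rightarrow> bool" where
  "strict_linear_on A P \<longleftrightarrow>
     (\<forall>x\<in>A. \<not> P x x) \<and>
     (\<forall>x\<in>A. \<forall>y\<in>A. \<forall>z\<in>A. P x y \<longrightarrow> P y z \<longrightarrow> P x z) \<and>
     (\<forall>x\<in>A. \<forall>y\<in>A. x \<noteq> y \<longrightarrow> P x y \<or> P y x)"

definition market ::
  "'d set \<Rightarrow> 'h set \<Rightarrow> ('d \<Rightarrow> 'h option \<Rightarrow> 'h option \<Rightarrow> bool)
     \<Rightarrow> ('h \<Rightarrow> 'd option \<Rightarrow> 'd option \<Rightarrow> bool) \<Rightarrow> bool" where
  "market D H Pd Ph \<longleftrightarrow> finite D \<and> finite H \<and> card D \<ge> 2 \<and> card H \<ge> 2 \<and>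
     (\<forall>d\<in>D. strict_linear_on (Some ` H \<union> {None}) (Pd d)) \<and>
     (\<forall>h\<in>H. strict_linear_on (Some ` D \<union> {None}) (Ph h))"

definition dset :: "('d \<times> 'h) set \<Rightarrow> 'd \<Rightarrow> 'h set" where
  "dset M d = {h. (d, h) \<in> M}"

definition hset :: "('d \<times> 'h) set \<Rightarrow> 'h \<Rightarrow> 'd set" where
  "hset M h = {d. (d, h) \<in> M}"

definition matching :: "'d set \<Rightarrow> 'h set \<Rightarrow> ('d \<times> 'h) set \<Rightarrow> bool" where
  "matching D H M \<longleftrightarrow> M \<subseteq> D \<times> H \<and>
     (\<forall>d h h'. (d, h) \<in> M \<longrightarrow> (d, h') \<in> M \<longrightarrow> h = h') \<and>
     (\<forall>d d' h. (d, h) \<in> M \<longrightarrow> (d', h) \<in> M \<longrightarrow> d = d')"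

text \<open>Partner mu(d) of a doctor and mu(h) of a hospital (None = unmatched).\<close>

definition pd :: "('d \<times> 'h) set \<Rightarrow> 'd \<Rightarrow> 'h option" where
  "pd M d = (if \<exists>h. (d, h) \<in> M then Some (THE h. (d, h) \<in> M) else None)"

definition ph :: "('d \<times> 'h) set \<Rightarrow> 'h \<Rightarrow> 'd option" where
  "ph M h = (if \<exists>d. (d, h) \<in> M then Some (THE d. (d, h) \<in> M) else None)"

definition blocks ::
  "('d \<Rightarrow> 'h option \<Rightarrow> 'h option \<Rightarrow> bool) \<Rightarrow> ('h \<Rightarrow> 'd option \<Rightarrow> 'd option \<Rightarrow> bool)
     \<Rightarrow> ('d \<times> 'h) set \<Rightarrow> 'd \<Rightarrow> 'h \<Rightarrow> bool" where
  "blocks Pd Ph M d h \<longleftrightarrow> Pd d (Some h) (pd M d) \<and> Ph h (Some d) (ph M h)"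

definition stable ::
  "'d set \<Rightarrow> 'h set \<Rightarrow> ('d \<Rightarrow> 'h option \<Rightarrow> 'h option \<Rightarrow> bool)
     \<Rightarrow> ('h \<Rightarrow> 'd option \<Rightarrow> 'd option \<Rightarrow> bool) \<Rightarrow> ('d \<times> 'h) set \<Rightarrow> bool" where
  "stable D H Pd Ph M \<longleftrightarrow> matching D H M \<and>
     (\<forall>d\<in>D. \<forall>h\<in>H. \<not> blocks Pd Ph M d h)"

definition indiv_rational ::
  "('d \<Rightarrow> 'h option \<Rightarrow> 'h option \<Rightarrow> bool)
     \<Rightarrow> ('h \<Rightarrow> 'd option \<Rightarrow> 'd option \<Rightarrow> bool) \<Rightarrow> ('d \<times> 'h) set \<Rightarrow> bool" where
  "indiv_rational Pd Ph M \<longleftrightarrow>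
     (\<forall>(d, h)\<in>M. Pd d (Some h) None \<and> Ph h (Some d) None)"

definition choice :: "('a option \<Rightarrow> 'a option \<Rightarrow> bool) \<Rightarrow> nat \<Rightarrow> 'a set \<Rightarrow> 'a set" where
  "choice P k X =
     (let A = {x \<in> X. P (Some x) None} in
      if card A \<le> k then A else {x \<in> A. card {y \<in> A. P (Some y) (Some x)} < k})"

definition interview_matching ::
  "'d set \<Rightarrow> 'h set \<Rightarrow> ('h \<Rightarrow> nat) \<Rightarrow> ('d \<Rightarrow> nat) \<Rightarrow> ('d \<times> 'h) set \<Rightarrow> bool" where
  "interview_matching D H \<iota> \<kappa> N \<longleftrightarrow> N \<subseteq> D \<times> H \<and>
     (\<forall>d\<in>D. card (dset N d) \<le> \<kappa> d) \<and> (\<forall>h\<in>H. card (hset N h) \<le> \<iota> h)"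

definition pairwise_stable ::
  "'d set \<Rightarrow> 'h set \<Rightarrow> ('d \<Rightarrow> 'h option \<Rightarrow> 'h option \<Rightarrow> bool)
     \<Rightarrow> ('h \<Rightarrow> 'd option \<Rightarrow> 'd option \<Rightarrow> bool) \<Rightarrow> ('h \<Rightarrow> nat) \<Rightarrow> ('d \<Rightarrow> nat)
     \<Rightarrow> ('d \<times> 'h) set \<Rightarrow> bool" where
  "pairwise_stable D H Pd Ph \<iota> \<kappa> N \<longleftrightarrow> interview_matching D H \<iota> \<kappa> N \<and>
     (\<forall>d\<in>D. choice (Pd d) (\<kappa> d) (dset N d) = dset N d) \<and>
     (\<forall>h\<in>H. choice (Ph h) (\<iota> h) (hset N h) = hset N h) \<and>
     (\<forall>d\<in>D. \<forall>h\<in>H. (d, h) \<notin> N \<longrightarrow>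
        \<not> (h \<in> choice (Pd d) (\<kappa> d) (insert h (dset N d)) \<and>
           d \<in> choice (Ph h) (\<iota> h) (insert d (hset N h))))"

text \<open>Hospital-optimal pairwise stable interview matching (Blair order via choice).\<close>

definition hospital_optimal_ps ::
  "'d set \<Rightarrow> 'h set \<Rightarrow> ('d \<Rightarrow> 'h option \<Rightarrow> 'h option \<Rightarrow> bool)
     \<Rightarrow> ('h \<Rightarrow> 'd option \<Rightarrow> 'd option \<Rightarrow> bool) \<Rightarrow> ('h \<Rightarrow> nat) \<Rightarrow> ('d \<Rightarrow> nat)
     \<Rightarrow> ('d \<times> 'h) set \<Rightarrow> bool" where
  "hospital_optimal_ps D H Pd Ph \<iota> \<kappa> N \<longleftrightarrow> pairwise_stable D H Pd Ph \<iota> \<kappa> N \<and>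
     (\<forall>N'. pairwise_stable D H Pd Ph \<iota> \<kappa> N' \<longrightarrow>
        (\<forall>h\<in>H. choice (Ph h) (\<iota> h) (hset N h \<union> hset N' h) = hset N h))"

definition step1 ::
  "'d set \<Rightarrow> 'h set \<Rightarrow> ('d \<Rightarrow> 'h option \<Rightarrow> 'h option \<Rightarrow> bool)
     \<Rightarrow> ('h \<Rightarrow> 'd option \<Rightarrow> 'd option \<Rightarrow> bool) \<Rightarrow> ('h \<Rightarrow> nat) \<Rightarrow> ('d \<Rightarrow> nat)
     \<Rightarrow> ('d \<times> 'h) set" where
  "step1 D H Pd Ph \<iota> \<kappa> = (THE N. hospital_optimal_ps D H Pd Ph \<iota> \<kappa> N)"

definition restrict_pref ::
  "('a option \<Rightarrow> 'a option \<Rightarrow> bool) \<Rightarrow> 'a set \<Rightarrow> 'a option \<Rightarrow> 'a option \<Rightarrow> bool" where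
  "restrict_pref P S x y =
     (let T = Some ` {a \<in> S. P (Some a) None} \<union> {None} in
      if x \<in> T \<and> y \<in> T then P x y else x \<in> T \<and> y \<notin> T)"

text \<open>Outcome of doctor-proposing deferred acceptance = doctor-optimal stable matching
  (Gale--Shapley).\<close>

definition doctor_optimal_stable ::
  "'d set \<Rightarrow> 'h set \<Rightarrow> ('d \<Rightarrow> 'h option \<Rightarrow> 'h option \<Rightarrow> bool)
     \<Rightarrow> ('h \<Rightarrow> 'd option \<Rightarrow> 'd option \<Rightarrow> bool) \<Rightarrow> ('d \<times> 'h) set \<Rightarrow> bool" where
  "doctor_optimal_stable D H Pd Ph M \<longleftrightarrow>
     indiv_rational Pd Ph M \<and> stable D H Pd Ph M \<and>
     (\<forall>M'. indiv_rational Pd Ph M' \<and> stable D H Pd Ph M' \<longrightarrow>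
        (\<forall>d\<in>D. pd M d = pd M' d \<or> Pd d (pd M d) (pd M' d)))"

definition ik_matching ::
  "'d set \<Rightarrow> 'h set \<Rightarrow> ('d \<Rightarrow> 'h option \<Rightarrow> 'h option \<Rightarrow> bool)
     \<Rightarrow> ('h \<Rightarrow> 'd option \<Rightarrow> 'd option \<Rightarrow> bool) \<Rightarrow> ('h \<Rightarrow> nat) \<Rightarrow> ('d \<Rightarrow> nat)
     \<Rightarrow> ('d \<times> 'h) set" where
  "ik_matching D H Pd Ph \<iota> \<kappa> =
     (let \<nu> = step1 D H Pd Ph \<iota> \<kappa> in
      THE M. doctor_optimal_stable D H
        (\<lambda>d. restrict_pref (Pd d) (dset \<nu> d)) (\<lambda>h. restrict_pref (Ph h) (hset \<nu> h)) M)"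

definition adequate ::
  "'d set \<Rightarrow> 'h set \<Rightarrow> ('d \<Rightarrow> 'h option \<Rightarrow> 'h option \<Rightarrow> bool)
     \<Rightarrow> ('h \<Rightarrow> 'd option \<Rightarrow> 'd option \<Rightarrow> bool) \<Rightarrow> ('h \<Rightarrow> nat) \<Rightarrow> ('d \<Rightarrow> nat) \<Rightarrow> bool" where
  "adequate D H Pd Ph \<iota> \<kappa> \<longleftrightarrow> stable D H Pd Ph (ik_matching D H Pd Ph \<iota> \<kappa>)"

end

theory Submission
  imports Defs
begin

definition acc :: "('a option \<Rightarrow> 'a option \<Rightarrow> bool) \<Rightarrow> 'a \<Rightarrow> bool" where
  "acc P x \<longleftrightarrow> P (Some x) None"

definition rk :: "('a option \<Rightarrow> 'a option \<Rightarrow> bool) \<Rightarrow> 'a set \<Rightarrow> 'a \<Rightarrow> nat" where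
  "rk P X x = card {y\<in>X. acc P y \<and> P (Some y) (Some x)}"

definition linacc :: "'a set \<Rightarrow> ('a option \<Rightarrow> 'a option \<Rightarrow> bool) \<Rightarrow> bool" where
  "linacc U P \<longleftrightarrow> (\<forall>x\<in>U. \<forall>y\<in>U. \<forall>z\<in>U. acc P x \<longrightarrow> acc P y \<longrightarrow> acc P z \<longrightarrow>
     \<not> P (Some x) (Some x) \<and> (P (Some x) (Some y) \<longrightarrow> P (Some y) (Some z) \<longrightarrow> P (Some x) (Some z))
     \<and> (x \<noteq> y \<longrightarrow> P (Some x) (Some y) \<or> P (Some y) (Some x)))"

lemma linacc_irr: "linacc U P \<Longrightarrow> x \<in> U \<Longrightarrow> acc P x \<Longrightarrow> \<not> P (Some x) (Some x)"
  unfolding linacc_def by blast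
lemma linacc_trans: "linacc U P \<Longrightarrow> x \<in> U \<Longrightarrow> y \<in> U \<Longrightarrow> z \<in> U \<Longrightarrow> acc P x \<Longrightarrow> acc P y \<Longrightarrow> acc P z
  \<Longrightarrow> P (Some x) (Some y) \<Longrightarrow> P (Some y) (Some z) \<Longrightarrow> P (Some x) (Some z)"
  unfolding linacc_def by blast
lemma linacc_tot: "linacc U P \<Longrightarrow> x \<in> U \<Longrightarrow> y \<in> U \<Longrightarrow> acc P x \<Longrightarrow> acc P y \<Longrightarrow> x \<noteq> y
  \<Longrightarrow> P (Some x) (Some y) \<or> P (Some y) (Some x)"
  unfolding linacc_def by blast
lemma linacc_asym: "linacc U P \<Longrightarrow> x \<in> U \<Longrightarrow> y \<in> U \<Longrightarrow> acc P x \<Longrightarrow> acc P y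
  \<Longrightarrow> P (Some x) (Some y) \<Longrightarrow> \<not> P (Some y) (Some x)"
  unfolding linacc_def by blast

lemma choice_alt:
  assumes "linacc U P" "X \<subseteq> U" "finite X"
  shows "choice P k X = {x\<in>X. acc P x \<and> rk P X x < k}"
proof -
  let ?A = "{x \<in> X. P (Some x) None}"
  have fA: "finite ?A" using assms(3) by simp
  show ?thesis
  proof (cases "card ?A \<le> k")
    case True
    have "rk P X x < k" if "x \<in> X" "acc P x" for x
    proof -
      have "{y\<in>X. acc P y \<and> P (Some y) (Some x)} \<subseteq> ?A - {x}"
        using linacc_irr[OF assms(1)] assms(2) that unfolding acc_def by blast
      hence "rk P X x \<le> card (?A - {x})" unfolding rk_def using fA by (simp add: card_mono)
      also have "\<dots> < card ?A" using that fA unfolding acc_def by (intro card_Diff1_less) auto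
      finally show ?thesis using True by simp
    qed
    thus ?thesis using True unfolding choice_def Let_def acc_def by auto
  next
    case False
    thus ?thesis unfolding choice_def Let_def rk_def acc_def by auto
  qed
qed

lemma choice_sub: "choice P k X \<subseteq> X" unfolding choice_def Let_def by auto
lemma choice_acc: "x \<in> choice P k X \<Longrightarrow> acc P x" unfolding choice_def Let_def acc_def by (auto split: if_splits)

lemma rk_mono: "X \<subseteq> Y \<Longrightarrow> finite Y \<Longrightarrow> rk P X x \<le> rk P Y x"
  unfolding rk_def by (rule card_mono) auto

lemma rk_lt:
  assumes "linacc U P" "Y \<subseteq> U" "finite Y" "x \<in> Y" "acc P x"
  shows "rk P Y x < card {y\<in>Y. acc P y}"
proof -
  have "{y\<in>Y. acc P y \<and> P (Some y) (Some x)} \<subseteq> {y\<in>Y. acc P y} - {x}"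
    using linacc_irr[OF assms(1)] assms by blast
  hence "rk P Y x \<le> card ({y\<in>Y. acc P y} - {x})" unfolding rk_def using assms(3) by (simp add: card_mono)
  also have "\<dots> < card {y\<in>Y. acc P y}" using assms by (intro card_Diff1_less) auto
  finally show ?thesis .
qed

lemma rk_strict:
  assumes "linacc U P" "Y \<subseteq> U" "finite Y" "x \<in> Y" "acc P x" "y \<in> U" "acc P y" "P (Some x) (Some y)"
  shows "rk P Y x < rk P Y y"
proof -
  have s: "{z\<in>Y. acc P z \<and> P (Some z) (Some x)} \<subseteq> {z\<in>Y. acc P z \<and> P (Some z) (Some y)}"
    using linacc_trans[OF assms(1)] assms by blast
  have "x \<in> {z\<in>Y. acc P z \<and> P (Some z) (Some y)}" using assms by blast
  moreover have "x \<notin> {z\<in>Y. acc P z \<and> P (Some z) (Some x)}" using linacc_irr[OF assms(1)] assms by blast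
  ultimately have "{z\<in>Y. acc P z \<and> P (Some z) (Some x)} \<subset> {z\<in>Y. acc P z \<and> P (Some z) (Some y)}"
    using s by blast
  thus ?thesis unfolding rk_def using assms(3) by (simp add: psubset_card_mono)
qed

lemma rk_inj:
  assumes "linacc U P" "Y \<subseteq> U" "finite Y"
  shows "inj_on (rk P Y) {y\<in>Y. acc P y}"
proof (rule inj_onI)
  fix x y assume x: "x \<in> {y\<in>Y. acc P y}" and y: "y \<in> {y\<in>Y. acc P y}" and e: "rk P Y x = rk P Y y"
  show "x = y"
  proof (rule ccontr)
    assume "x \<noteq> y"
    then have "P (Some x) (Some y) \<or> P (Some y) (Some x)" using linacc_tot[OF assms(1)] x y assms(2) by blast
    moreover have "x \<in> U" "y \<in> U" "x \<in> Y" "y \<in> Y" "acc P x" "acc P y" using x y assms(2) by auto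
    ultimately show False using rk_strict[OF assms, of x y] rk_strict[OF assms, of y x] e by auto
  qed
qed

lemma rk_image:
  assumes "linacc U P" "Y \<subseteq> U" "finite Y"
  shows "rk P Y ` {y\<in>Y. acc P y} = {..<card {y\<in>Y. acc P y}}"
proof -
  have "rk P Y ` {y\<in>Y. acc P y} \<subseteq> {..<card {y\<in>Y. acc P y}}" using rk_lt[OF assms] by auto
  moreover have "card (rk P Y ` {y\<in>Y. acc P y}) = card {..<card {y\<in>Y. acc P y}}"
    using card_image[OF rk_inj[OF assms]] by simp
  ultimately show ?thesis by (simp add: card_subset_eq)
qed

lemma card_choice_eq:
  assumes "linacc U P" "Y \<subseteq> U" "finite Y"
  shows "card (choice P k Y) = min k (card {y\<in>Y. acc P y})"
proof -
  have c: "choice P k Y = {y\<in>{y\<in>Y. acc P y}. rk P Y y < k}" using choice_alt[OF assms] by auto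
  let ?A = "{y\<in>Y. acc P y}"
  have i1: "rk P Y ` {y\<in>?A. rk P Y y < k} = rk P Y ` ?A \<inter> {..<k}" by auto
  have img: "rk P Y ` {y\<in>?A. rk P Y y < k} = {..<card ?A} \<inter> {..<k}"
    unfolding i1 rk_image[OF assms] ..
  have inj: "inj_on (rk P Y) {y\<in>?A. rk P Y y < k}"
    using rk_inj[OF assms] by (rule inj_on_subset) auto
  have "card {y\<in>?A. rk P Y y < k} = card (rk P Y ` {y\<in>?A. rk P Y y < k})"
    using card_image[OF inj] by simp
  also have "\<dots> = card ({..<card ?A} \<inter> {..<k})" unfolding img ..
  finally have "card {y\<in>?A. rk P Y y < k} = card ({..<card ?A} \<inter> {..<k})" .
  also have "\<dots> = card {..<min k (card {y\<in>Y. acc P y})}" by (rule arg_cong[where f=card]) auto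
  also have "\<dots> = min k (card {y\<in>Y. acc P y})" by simp
  finally show ?thesis using c by simp
qed

lemma card_choice:
  assumes "linacc U P" "Y \<subseteq> U" "finite Y"
  shows "card (choice P k Y) \<le> k"
  using card_choice_eq[OF assms] by simp

lemma choice_mono_mem:
  assumes "linacc U P" "Y \<subseteq> U" "finite Y" "X \<subseteq> Y" "x \<in> X" "x \<in> choice P k Y"
  shows "x \<in> choice P k X"
proof -
  have fX: "finite X" using finite_subset[OF assms(4) assms(3)] .
  have XU: "X \<subseteq> U" using assms(2,4) by blast
  have "acc P x" "rk P Y x < k" using assms(6) unfolding choice_alt[OF assms(1-3)] by auto
  moreover have "rk P X x \<le> rk P Y x" using rk_mono[OF assms(4) assms(3)] .
  ultimately show ?thesis unfolding choice_alt[OF assms(1) XU fX] using assms(5) by auto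
qed

lemma choice_better:
  assumes "linacc U P" "Y \<subseteq> U" "finite Y" "x \<in> Y" "acc P x" "x \<notin> choice P k Y" "y \<in> choice P k Y"
  shows "P (Some y) (Some x)"
proof -
  have y: "y \<in> Y" "acc P y" "rk P Y y < k" using assms(7) unfolding choice_alt[OF assms(1-3)] by auto
  have rx: "rk P Y x \<ge> k" using assms(4-6) unfolding choice_alt[OF assms(1-3)] by auto
  hence "x \<noteq> y" using y by auto
  have U: "x \<in> U" "y \<in> U" using assms(2,4) y(1) by auto
  have "P (Some x) (Some y) \<or> P (Some y) (Some x)" by (rule linacc_tot[OF assms(1) U assms(5) y(2) \<open>x \<noteq> y\<close>])
  moreover have "\<not> P (Some x) (Some y)"
  proof
    assume "P (Some x) (Some y)"
    hence "rk P Y x < rk P Y y" by (rule rk_strict[OF assms(1-5) U(2) y(2)])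
    thus False using y(3) rx by simp
  qed
  ultimately show ?thesis by blast
qed

lemma choice_eq:
  assumes "linacc U P" "Y \<subseteq> U" "finite Y" "choice P k Y \<subseteq> X" "X \<subseteq> Y"
  shows "choice P k X = choice P k Y"
proof
  show "choice P k Y \<subseteq> choice P k X"
  proof
    fix x assume xa: "x \<in> choice P k Y"
    have "x \<in> X" using xa assms(4) by blast
    thus "x \<in> choice P k X" by (rule choice_mono_mem[OF assms(1-3) assms(5) _ xa])
  qed
next
  have fX: "finite X" using finite_subset[OF assms(5) assms(3)] .
  have XU: "X \<subseteq> U" using assms(2,5) by blast
  show "choice P k X \<subseteq> choice P k Y"
  proof
    fix x assume xX: "x \<in> choice P k X"
    show "x \<in> choice P k Y"
    proof (rule ccontr)
      assume nx: "x \<notin> choice P k Y"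
      have x: "x \<in> X" "acc P x" "rk P X x < k" using xX unfolding choice_alt[OF assms(1) XU fX] by auto
      have xY: "x \<in> Y" using x assms(5) by blast
      have xU: "x \<in> U" using xY assms(2) by blast
      have rx: "rk P Y x \<ge> k" using x xY nx unfolding choice_alt[OF assms(1-3)] by auto
      have "{y\<in>Y. acc P y \<and> P (Some y) (Some x)} \<union> {x} \<subseteq> {y\<in>Y. acc P y}" using x xY by auto
      hence "card ({y\<in>Y. acc P y \<and> P (Some y) (Some x)} \<union> {x}) \<le> card {y\<in>Y. acc P y}"
        using assms(3) by (simp add: card_mono)
      moreover have "x \<notin> {y\<in>Y. acc P y \<and> P (Some y) (Some x)}" using linacc_irr[OF assms(1) xU x(2)] by blast
      ultimately have "rk P Y x + 1 \<le> card {y\<in>Y. acc P y}" unfolding rk_def using assms(3) by simp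
      hence cc: "card (choice P k Y) = k" using card_choice_eq[OF assms(1-3), of k] rx by simp
      have "choice P k Y \<subseteq> {y\<in>X. acc P y \<and> P (Some y) (Some x)}"
      proof
        fix y assume y: "y \<in> choice P k Y"
        have "P (Some y) (Some x)" using choice_better[OF assms(1-3) xY x(2) nx y] .
        moreover have "y \<in> X" using y assms(4) by blast
        moreover have "acc P y" by (rule choice_acc[OF y])
        ultimately show "y \<in> {y\<in>X. acc P y \<and> P (Some y) (Some x)}" by blast
      qed
      hence "card (choice P k Y) \<le> card {y\<in>X. acc P y \<and> P (Some y) (Some x)}"
        by (intro card_mono) (use fX in auto)
      hence "k \<le> rk P X x" unfolding rk_def using cc by simp
      thus False using x by simp
    qed
  qed
qed

lemma choice_idem:
  assumes "linacc U P" "Y \<subseteq> U" "finite Y"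
  shows "choice P k (choice P k Y) = choice P k Y"
  by (rule choice_eq[OF assms subset_refl choice_sub])

lemma beat_mono:
  assumes "linacc U P" "X \<subseteq> U" "finite X" "X' \<subseteq> U" "finite X'" "h \<in> U"
    and "h \<notin> choice P k (insert h X)" "choice P k X \<subseteq> X'"
  shows "h \<notin> choice P k (insert h X')"
proof
  assume hin: "h \<in> choice P k (insert h X')"
  have ha: "acc P h" by (rule choice_acc[OF hin])
  have fi: "insert h X \<subseteq> U" "finite (insert h X)" using assms by auto
  have "rk P (insert h X) h \<ge> k" using assms(7) ha unfolding choice_alt[OF assms(1) fi] by auto
  moreover have "{y\<in>insert h X. acc P y \<and> P (Some y) (Some h)} = {y\<in>X. acc P y \<and> P (Some y) (Some h)}"
    using linacc_irr[OF assms(1) assms(6) ha] by auto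
  ultimately have kB: "k \<le> card {y\<in>X. acc P y \<and> P (Some y) (Some h)}" unfolding rk_def by simp
  have fC: "finite (choice P k X)" using finite_subset[OF choice_sub assms(3)] .
  have key: "k \<le> card {y\<in>choice P k X. P (Some y) (Some h)}"
  proof (cases "card {y\<in>X. acc P y} \<le> k")
    case True
    have "{y\<in>X. acc P y \<and> P (Some y) (Some h)} \<subseteq> {y\<in>choice P k X. P (Some y) (Some h)}"
    proof
      fix y assume y: "y \<in> {y\<in>X. acc P y \<and> P (Some y) (Some h)}"
      have yy: "y \<in> X" "acc P y" using y by auto
      have "rk P X y < card {y\<in>X. acc P y}" by (rule rk_lt[OF assms(1-3) yy])
      thus "y \<in> {y\<in>choice P k X. P (Some y) (Some h)}" using True y unfolding choice_alt[OF assms(1-3)] by auto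
    qed
    hence "card {y\<in>X. acc P y \<and> P (Some y) (Some h)} \<le> card {y\<in>choice P k X. P (Some y) (Some h)}"
      by (intro card_mono) (use fC in auto)
    thus ?thesis using kB by simp
  next
    case False
    have cc: "card (choice P k X) = k" using card_choice_eq[OF assms(1-3), of k] False by simp
    have "choice P k X \<subseteq> {y\<in>choice P k X. P (Some y) (Some h)}"
    proof
      fix y assume y: "y \<in> choice P k X"
      have y2: "y \<in> X" "acc P y" "rk P X y < k" using y unfolding choice_alt[OF assms(1-3)] by auto
      have yU: "y \<in> U" using y2(1) assms(2) by blast
      have "P (Some y) (Some h)"
      proof (rule ccontr)
        assume np: "\<not> P (Some y) (Some h)"
        have "{z\<in>X. acc P z \<and> P (Some z) (Some h)} \<subseteq> {z\<in>X. acc P z \<and> P (Some z) (Some y)}"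
        proof (cases "y = h")
          case True thus ?thesis by simp
        next
          case False
          have "P (Some h) (Some y)" using np linacc_tot[OF assms(1) assms(6) yU ha y2(2)] False by blast
          show ?thesis
          proof
            fix z assume z: "z \<in> {z\<in>X. acc P z \<and> P (Some z) (Some h)}"
            have zU: "z \<in> U" using z assms(2) by blast
            have "P (Some z) (Some y)"
              using linacc_trans[OF assms(1) zU assms(6) yU _ ha y2(2)] z \<open>P (Some h) (Some y)\<close> by blast
            thus "z \<in> {z\<in>X. acc P z \<and> P (Some z) (Some y)}" using z by blast
          qed
        qed
        hence "card {z\<in>X. acc P z \<and> P (Some z) (Some h)} \<le> rk P X y" unfolding rk_def
          using assms(3) by (simp add: card_mono)
        thus False using kB y2 by simp
      qed
      thus "y \<in> {y\<in>choice P k X. P (Some y) (Some h)}" using y by blast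
    qed
    hence "card (choice P k X) \<le> card {y\<in>choice P k X. P (Some y) (Some h)}"
      by (intro card_mono) (use fC in auto)
    thus ?thesis using cc by simp
  qed
  have "{y\<in>choice P k X. P (Some y) (Some h)} \<subseteq> {y\<in>insert h X'. acc P y \<and> P (Some y) (Some h)}"
  proof
    fix y assume y: "y \<in> {y\<in>choice P k X. P (Some y) (Some h)}"
    have "acc P y" using choice_acc[of y P k X] y by simp
    thus "y \<in> {y\<in>insert h X'. acc P y \<and> P (Some y) (Some h)}" using y assms(8) by blast
  qed
  hence "card {y\<in>choice P k X. P (Some y) (Some h)} \<le> rk P (insert h X') h" unfolding rk_def
    by (intro card_mono) (use assms(5) in auto)
  hence "k \<le> rk P (insert h X') h" using key by simp
  moreover have fi2: "insert h X' \<subseteq> U" "finite (insert h X')" using assms by auto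
  have "choice P k (insert h X') = {x\<in>insert h X'. acc P x \<and> rk P (insert h X') x < k}"
    by (rule choice_alt[OF assms(1) fi2])
  ultimately show False using hin by auto
qed

lemma ps_mem:
  assumes "pairwise_stable D H Pd Ph \<iota> \<kappa> N" "(d, h) \<in> N"
  shows "d \<in> D" "h \<in> H" "acc (Pd d) h" "acc (Ph h) d"
proof -
  have NDH: "N \<subseteq> D \<times> H" using assms(1) unfolding pairwise_stable_def interview_matching_def by simp
  show dD: "d \<in> D" and hH: "h \<in> H" using NDH assms(2) by auto
  have "choice (Pd d) (\<kappa> d) (dset N d) = dset N d" using assms(1) dD unfolding pairwise_stable_def by simp
  moreover have "h \<in> dset N d" using assms(2) unfolding dset_def by simp
  ultimately show "acc (Pd d) h" using choice_acc by metis
  have "choice (Ph h) (\<iota> h) (hset N h) = hset N h" using assms(1) hH unfolding pairwise_stable_def by simp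
  moreover have "d \<in> hset N h" using assms(2) unfolding hset_def by simp
  ultimately show "acc (Ph h) d" using choice_acc by metis
qed

lemma ps_sub: "pairwise_stable D H Pd Ph \<iota> \<kappa> N \<Longrightarrow> N \<subseteq> D \<times> H"
  unfolding pairwise_stable_def interview_matching_def by simp
lemma ps_card_d: "pairwise_stable D H Pd Ph \<iota> \<kappa> N \<Longrightarrow> d \<in> D \<Longrightarrow> card (dset N d) \<le> \<kappa> d"
  unfolding pairwise_stable_def interview_matching_def by simp
lemma ps_card_h: "pairwise_stable D H Pd Ph \<iota> \<kappa> N \<Longrightarrow> h \<in> H \<Longrightarrow> card (hset N h) \<le> \<iota> h"
  unfolding pairwise_stable_def interview_matching_def by simp
lemma ps_nb: "pairwise_stable D H Pd Ph \<iota> \<kappa> N \<Longrightarrow> d \<in> D \<Longrightarrow> h \<in> H \<Longrightarrow> (d, h) \<notin> N \<Longrightarrow>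
    \<not> (h \<in> choice (Pd d) (\<kappa> d) (insert h (dset N d)) \<and> d \<in> choice (Ph h) (\<iota> h) (insert d (hset N h)))"
  unfolding pairwise_stable_def by simp
lemma ps_dsub: assumes "pairwise_stable D H Pd Ph \<iota> \<kappa> N" shows "dset N d \<subseteq> H"
  using ps_sub[OF assms] unfolding dset_def by blast
lemma ps_hsub: assumes "pairwise_stable D H Pd Ph \<iota> \<kappa> N" shows "hset N h \<subseteq> D"
  using ps_sub[OF assms] unfolding hset_def by blast

locale da =
  fixes D :: "'d set" and H :: "'h set"
    and Pd :: "'d \<Rightarrow> 'h option \<Rightarrow> 'h option \<Rightarrow> bool"
    and Ph :: "'h \<Rightarrow> 'd option \<Rightarrow> 'd option \<Rightarrow> bool"
    and io :: "'h \<Rightarrow> nat" and ka :: "'d \<Rightarrow> nat"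
  assumes fD: "finite D" and fH: "finite H"
    and linH: "\<And>h. h \<in> H \<Longrightarrow> linacc D (Ph h)"
    and linD: "\<And>d. d \<in> D \<Longrightarrow> linacc H (Pd d)"
begin

definition offers :: "('d \<times> 'h) set \<Rightarrow> ('d \<times> 'h) set" where
  "offers R = {(d, h). d \<in> D \<and> h \<in> H \<and> d \<in> choice (Ph h) (io h) (D - hset R h)}"

definition accs :: "('d \<times> 'h) set \<Rightarrow> ('d \<times> 'h) set" where
  "accs R = {(d, h). (d, h) \<in> offers R \<and> h \<in> choice (Pd d) (ka d) (dset (offers R) d)}"

definition stp :: "('d \<times> 'h) set \<Rightarrow> ('d \<times> 'h) set" where
  "stp R = R \<union> (offers R - accs R)"

definition inv :: "('d \<times> 'h) set \<Rightarrow> bool" where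
  "inv R \<longleftrightarrow> R \<subseteq> D \<times> H \<and>
     (\<forall>d h. (d, h) \<in> R \<longrightarrow> h \<notin> choice (Pd d) (ka d) (insert h (dset (offers R) d))) \<and>
     (\<forall>k0 N. (\<forall>d\<in>D. k0 d \<le> ka d) \<longrightarrow> pairwise_stable D H Pd Ph io k0 N \<longrightarrow> R \<inter> N = {})"

lemma offers_sub: "offers R \<subseteq> D \<times> H" unfolding offers_def by auto

lemma offers_disj: "(d, h) \<in> offers R \<Longrightarrow> (d, h) \<notin> R"
proof -
  assume "(d, h) \<in> offers R"
  hence "d \<in> choice (Ph h) (io h) (D - hset R h)" unfolding offers_def by simp
  hence "d \<in> D - hset R h" using choice_sub[of "Ph h" "io h" "D - hset R h"] by blast
  thus "(d, h) \<notin> R" unfolding hset_def by simp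
qed

lemma hset_offers: "h \<in> H \<Longrightarrow> hset (offers R) h = choice (Ph h) (io h) (D - hset R h)"
proof -
  assume hH: "h \<in> H"
  have "choice (Ph h) (io h) (D - hset R h) \<subseteq> D" using choice_sub[of "Ph h" "io h" "D - hset R h"] by blast
  thus ?thesis unfolding offers_def hset_def using hH by blast
qed

lemma dset_offers_sub: "dset (offers R) d \<subseteq> H"
  unfolding offers_def dset_def by auto

lemma fin_dset: "finite (dset (offers R) d)"
  using finite_subset[OF dset_offers_sub fH] .

lemma dset_accs: "dset (accs R) d = choice (Pd d) (ka d) (dset (offers R) d)"
  using choice_sub[of "Pd d" "ka d" "dset (offers R) d"] unfolding accs_def dset_def by blast

lemma accs_next: "accs R \<subseteq> offers (stp R)"
proof
  fix p assume p: "p \<in> accs R"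
  obtain d h where pdh: "p = (d, h)" by (cases p)
  have o: "(d, h) \<in> offers R" using p pdh unfolding accs_def by simp
  have dD: "d \<in> D" and hH: "h \<in> H" and dc: "d \<in> choice (Ph h) (io h) (D - hset R h)"
    using o unfolding offers_def by auto
  have "(d, h) \<notin> R" using offers_disj[OF o] .
  hence nst: "(d, h) \<notin> stp R" using p pdh unfolding stp_def by simp
  have sub: "D - hset (stp R) h \<subseteq> D - hset R h" unfolding stp_def hset_def by auto
  have "d \<in> D - hset (stp R) h" using dD nst unfolding hset_def by simp
  moreover have DR: "D - hset R h \<subseteq> D" "finite (D - hset R h)" using fD by auto
  ultimately have "d \<in> choice (Ph h) (io h) (D - hset (stp R) h)"
    by (intro choice_mono_mem[OF linH[OF hH] DR sub _ dc])
  thus "p \<in> offers (stp R)" using pdh dD hH unfolding offers_def by simp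
qed

lemma inv_init: "inv {}"
  unfolding inv_def by simp

lemma inv_step:
  assumes iv: "inv R"
  shows "inv (stp R)"
proof -
  have R1: "R \<subseteq> D \<times> H" and R2: "\<And>d h. (d, h) \<in> R \<Longrightarrow> h \<notin> choice (Pd d) (ka d) (insert h (dset (offers R) d))"
    and R3: "\<And>k0 N. (\<forall>d\<in>D. k0 d \<le> ka d) \<Longrightarrow> pairwise_stable D H Pd Ph io k0 N \<Longrightarrow> R \<inter> N = {}"
    using iv unfolding inv_def by blast+
  have S1: "stp R \<subseteq> D \<times> H" using R1 offers_sub unfolding stp_def by blast
  have S2: "h \<notin> choice (Pd d) (ka d) (insert h (dset (offers (stp R)) d))" if dh: "(d, h) \<in> stp R" for d h
  proof -
    have dD: "d \<in> D" and hH: "h \<in> H" using dh S1 by auto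
    let ?X = "dset (offers R) d" and ?X' = "dset (offers (stp R)) d"
    have cX: "choice (Pd d) (ka d) ?X \<subseteq> ?X'"
      using accs_next dset_accs[of R d] unfolding dset_def by blast
    have b: "h \<notin> choice (Pd d) (ka d) (insert h ?X)"
    proof (cases "(d, h) \<in> R")
      case True thus ?thesis using R2 by blast
    next
      case False
      hence "(d, h) \<in> offers R - accs R" using dh unfolding stp_def by simp
      hence "h \<in> ?X" "h \<notin> choice (Pd d) (ka d) ?X" unfolding accs_def dset_def by auto
      thus ?thesis by (simp add: insert_absorb)
    qed
    show ?thesis by (rule beat_mono[OF linD[OF dD] dset_offers_sub fin_dset dset_offers_sub fin_dset hH b cX])
  qed
  have S3: "stp R \<inter> N = {}" if k0: "\<forall>d\<in>D. k0 d \<le> ka d" and ps: "pairwise_stable D H Pd Ph io k0 N" for k0 N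
  proof (rule ccontr)
    assume "stp R \<inter> N \<noteq> {}"
    then obtain d h where dhS: "(d, h) \<in> stp R" and dhN: "(d, h) \<in> N" by auto
    have RN: "R \<inter> N = {}" using R3 k0 ps by blast
    hence "(d, h) \<notin> R" using dhN by blast
    hence oa: "(d, h) \<in> offers R" "(d, h) \<notin> accs R" using dhS unfolding stp_def by auto
    have dD: "d \<in> D" and hH: "h \<in> H" using oa(1) offers_sub by auto
    have ha: "acc (Pd d) h" using ps_mem[OF ps dhN] by blast
    let ?X = "dset (offers R) d"
    have hX: "h \<in> ?X" using oa(1) unfolding dset_def by simp
    have hnc: "h \<notin> choice (Pd d) (ka d) ?X" using oa unfolding accs_def by simp
    have lin: "linacc H (Pd d)" by (rule linD[OF dD])
    have rkh: "ka d \<le> rk (Pd d) ?X h"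
      using hX ha hnc unfolding choice_alt[OF lin dset_offers_sub fin_dset] by auto
    let ?B = "{y\<in>?X. acc (Pd d) y \<and> Pd d (Some y) (Some h)}"
    let ?Nd = "dset N d"
    have NdH: "?Nd \<subseteq> H" by (rule ps_dsub[OF ps])
    have fNd: "finite ?Nd" using finite_subset[OF NdH fH] .
    have cNd: "card ?Nd \<le> k0 d" by (rule ps_card_d[OF ps dD])
    have hNd: "h \<in> ?Nd" using dhN unfolding dset_def by simp
    have hB: "h \<notin> ?B" using linacc_irr[OF lin hH ha] by blast
    have "\<not> ?B \<subseteq> ?Nd"
    proof
      assume "?B \<subseteq> ?Nd"
      hence "?B \<subseteq> ?Nd - {h}" using hB by blast
      hence "card ?B \<le> card (?Nd - {h})" using fNd by (simp add: card_mono)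
      also have "\<dots> < card ?Nd" using fNd hNd by (rule card_Diff1_less)
      finally have "card ?B < k0 d" using cNd by simp
      moreover have "card ?B = rk (Pd d) ?X h" unfolding rk_def ..
      ultimately show False using rkh k0 dD by fastforce
    qed
    then obtain h' where h'B: "h' \<in> ?B" and h'N: "h' \<notin> ?Nd" by blast
    have h'X: "h' \<in> ?X" and h'a: "acc (Pd d) h'" and h'h: "Pd d (Some h') (Some h)" using h'B by auto
    have h'o: "(d, h') \<in> offers R" using h'X unfolding dset_def by simp
    have h'H: "h' \<in> H" using h'o offers_sub by auto
    have dh'N: "(d, h') \<notin> N" using h'N unfolding dset_def by simp
    have c1: "h' \<in> choice (Pd d) (k0 d) (insert h' ?Nd)"
    proof -
      have sub: "{y\<in>insert h' ?Nd. acc (Pd d) y \<and> Pd d (Some y) (Some h')} \<subseteq> ?Nd - {h}"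
      proof
        fix y assume y: "y \<in> {y\<in>insert h' ?Nd. acc (Pd d) y \<and> Pd d (Some y) (Some h')}"
        have "y \<noteq> h'" using y linacc_irr[OF lin h'H h'a] by blast
        moreover have "y \<noteq> h" using y linacc_asym[OF lin h'H hH h'a ha h'h] by blast
        ultimately show "y \<in> ?Nd - {h}" using y by blast
      qed
      have "rk (Pd d) (insert h' ?Nd) h' \<le> card (?Nd - {h})" unfolding rk_def
        using card_mono[OF _ sub] fNd by simp
      also have "\<dots> < card ?Nd" using fNd hNd by (rule card_Diff1_less)
      finally have "rk (Pd d) (insert h' ?Nd) h' < k0 d" using cNd by simp
      moreover have "insert h' ?Nd \<subseteq> H" "finite (insert h' ?Nd)" using NdH h'H fNd by auto
      ultimately show ?thesis using h'a unfolding choice_alt[OF lin \<open>insert h' ?Nd \<subseteq> H\<close> \<open>finite (insert h' ?Nd)\<close>] by simp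
    qed
    have c2: "d \<in> choice (Ph h') (io h') (insert d (hset N h'))"
    proof -
      have dc: "d \<in> choice (Ph h') (io h') (D - hset R h')" using h'o unfolding offers_def by simp
      have NhD: "hset N h' \<subseteq> D" by (rule ps_hsub[OF ps])
      have sub: "insert d (hset N h') \<subseteq> D - hset R h'"
      proof
        fix x assume x: "x \<in> insert d (hset N h')"
        show "x \<in> D - hset R h'"
        proof (cases "x = d")
          case True
          have "(d, h') \<notin> R" by (rule offers_disj[OF h'o])
          thus ?thesis using True dD unfolding hset_def by simp
        next
          case False
          hence xN: "(x, h') \<in> N" using x unfolding hset_def by simp
          hence "(x, h') \<notin> R" using RN by blast
          moreover have "x \<in> D" using xN NhD unfolding hset_def by blast
          ultimately show ?thesis unfolding hset_def by simp
        qed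
      qed
      have DR': "D - hset R h' \<subseteq> D" "finite (D - hset R h')" using fD by auto
      have din: "d \<in> insert d (hset N h')" by simp
      show ?thesis by (rule choice_mono_mem[OF linH[OF h'H] DR' sub din dc])
    qed
    have "\<not> (h' \<in> choice (Pd d) (k0 d) (insert h' (dset N d)) \<and> d \<in> choice (Ph h') (io h') (insert d (hset N h')))"
      by (rule ps_nb[OF ps dD h'H dh'N])
    thus False using c1 c2 by blast
  qed
  show ?thesis unfolding inv_def using S1 S2 S3 by blast
qed

lemma fix_exists: "inv R \<Longrightarrow> \<exists>R'. inv R' \<and> stp R' = R'"
proof (induction "card (D \<times> H - R)" arbitrary: R rule: less_induct)
  case less
  show ?case
  proof (cases "stp R = R")
    case True thus ?thesis using less.prems by blast
  next
    case False
    have s: "R \<subseteq> stp R" unfolding stp_def by blast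
    have i: "inv (stp R)" by (rule inv_step[OF less.prems])
    have "stp R \<subseteq> D \<times> H" using i unfolding inv_def by blast
    hence "D \<times> H - stp R \<subset> D \<times> H - R" using s False by blast
    hence "card (D \<times> H - stp R) < card (D \<times> H - R)"
      using fD fH by (intro psubset_card_mono) auto
    thus ?thesis using less.hyps[OF _ i] by blast
  qed
qed

theorem da_exists:
  "\<exists>\<nu>. pairwise_stable D H Pd Ph io ka \<nu> \<and>
     (\<forall>k0 N. (\<forall>d\<in>D. k0 d \<le> ka d) \<longrightarrow> pairwise_stable D H Pd Ph io k0 N \<longrightarrow>
        (\<forall>h\<in>H. choice (Ph h) (io h) (hset \<nu> h \<union> hset N h) = hset \<nu> h))"
proof -
  obtain R where iv: "inv R" and fx: "stp R = R" using fix_exists[OF inv_init] by blast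
  have R2: "\<And>d h. (d, h) \<in> R \<Longrightarrow> h \<notin> choice (Pd d) (ka d) (insert h (dset (offers R) d))"
    and R3: "\<And>k0 N. (\<forall>d\<in>D. k0 d \<le> ka d) \<Longrightarrow> pairwise_stable D H Pd Ph io k0 N \<Longrightarrow> R \<inter> N = {}"
    using iv unfolding inv_def by blast+
  define \<nu> where "\<nu> = offers R"
  have oa: "\<nu> \<subseteq> accs R"
  proof
    fix p assume p: "p \<in> \<nu>"
    obtain d h where pdh: "p = (d, h)" by (cases p)
    have "(d, h) \<notin> R" using offers_disj p pdh \<nu>_def by blast
    thus "p \<in> accs R" using p pdh fx \<nu>_def unfolding stp_def by blast
  qed
  have dsv: "choice (Pd d) (ka d) (dset \<nu> d) = dset \<nu> d" for d
  proof
    show "choice (Pd d) (ka d) (dset \<nu> d) \<subseteq> dset \<nu> d" by (rule choice_sub)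
    show "dset \<nu> d \<subseteq> choice (Pd d) (ka d) (dset \<nu> d)"
      using oa unfolding \<nu>_def accs_def dset_def by blast
  qed
  have hsv: "h \<in> H \<Longrightarrow> hset \<nu> h = choice (Ph h) (io h) (D - hset R h)" for h
    unfolding \<nu>_def by (rule hset_offers)
  have DR: "D - hset R h \<subseteq> D" "finite (D - hset R h)" for h using fD by auto
  have vDH: "\<nu> \<subseteq> D \<times> H" unfolding \<nu>_def by (rule offers_sub)
  have ps: "pairwise_stable D H Pd Ph io ka \<nu>"
    unfolding pairwise_stable_def interview_matching_def
  proof (intro conjI ballI allI impI)
    show "\<nu> \<subseteq> D \<times> H" by (rule vDH)
  next
    fix d assume dD: "d \<in> D"
    have "card (choice (Pd d) (ka d) (dset \<nu> d)) \<le> ka d"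
      using card_choice[OF linD[OF dD] dset_offers_sub fin_dset] unfolding \<nu>_def .
    thus "card (dset \<nu> d) \<le> ka d" using dsv by simp
  next
    fix h assume hH: "h \<in> H"
    show "card (hset \<nu> h) \<le> io h" using card_choice[OF linH[OF hH] DR] hsv[OF hH] by simp
  next
    fix d assume "d \<in> D" show "choice (Pd d) (ka d) (dset \<nu> d) = dset \<nu> d" by (rule dsv)
  next
    fix h assume hH: "h \<in> H"
    show "choice (Ph h) (io h) (hset \<nu> h) = hset \<nu> h"
      using choice_idem[OF linH[OF hH] DR] hsv[OF hH] by simp
  next
    fix d h assume dD: "d \<in> D" and hH: "h \<in> H" and nv: "(d, h) \<notin> \<nu>"
    show "\<not> (h \<in> choice (Pd d) (ka d) (insert h (dset \<nu> d)) \<and> d \<in> choice (Ph h) (io h) (insert d (hset \<nu> h)))"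
    proof (cases "(d, h) \<in> R")
      case True thus ?thesis using R2 \<nu>_def by blast
    next
      case False
      have sub1: "choice (Ph h) (io h) (D - hset R h) \<subseteq> insert d (hset \<nu> h)" using hsv[OF hH] by blast
      have sub2: "insert d (hset \<nu> h) \<subseteq> D - hset R h"
        using hsv[OF hH] choice_sub[of "Ph h" "io h" "D - hset R h"] dD False unfolding hset_def by blast
      have "choice (Ph h) (io h) (insert d (hset \<nu> h)) = hset \<nu> h"
        using choice_eq[OF linH[OF hH] DR sub1 sub2] hsv[OF hH] by simp
      thus ?thesis using nv unfolding hset_def by simp
    qed
  qed
  have opt: "\<forall>h\<in>H. choice (Ph h) (io h) (hset \<nu> h \<union> hset N h) = hset \<nu> h"
    if k0: "\<forall>d\<in>D. k0 d \<le> ka d" and psN: "pairwise_stable D H Pd Ph io k0 N" for k0 N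
  proof
    fix h assume hH: "h \<in> H"
    have RN: "R \<inter> N = {}" using R3 k0 psN by blast
    have NhD: "hset N h \<subseteq> D" by (rule ps_hsub[OF psN])
    have sub1: "choice (Ph h) (io h) (D - hset R h) \<subseteq> hset \<nu> h \<union> hset N h" using hsv[OF hH] by blast
    have sub2: "hset \<nu> h \<union> hset N h \<subseteq> D - hset R h"
      using hsv[OF hH] choice_sub[of "Ph h" "io h" "D - hset R h"] NhD RN unfolding hset_def by blast
    show "choice (Ph h) (io h) (hset \<nu> h \<union> hset N h) = hset \<nu> h"
      using choice_eq[OF linH[OF hH] DR sub1 sub2] hsv[OF hH] by simp
  qed
  show ?thesis using ps opt by blast
qed

end

lemma sl_linacc:
  assumes sl: "strict_linear_on (Some ` U \<union> {None}) P"
  shows "linacc U P"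
  unfolding linacc_def
proof (intro ballI impI conjI)
  fix x y z assume xyz: "x \<in> U" "y \<in> U" "z \<in> U"
  have s: "Some x \<in> Some ` U \<union> {None}" "Some y \<in> Some ` U \<union> {None}" "Some z \<in> Some ` U \<union> {None}"
    using xyz by auto
  have irr: "\<forall>x\<in>Some ` U \<union> {None}. \<not> P x x"
    and tr: "\<forall>x\<in>Some ` U \<union> {None}. \<forall>y\<in>Some ` U \<union> {None}. \<forall>z\<in>Some ` U \<union> {None}. P x y \<longrightarrow> P y z \<longrightarrow> P x z"
    and tot: "\<forall>x\<in>Some ` U \<union> {None}. \<forall>y\<in>Some ` U \<union> {None}. x \<noteq> y \<longrightarrow> P x y \<or> P y x"
    using sl unfolding strict_linear_on_def by blast+
  show "\<not> P (Some x) (Some x)" using irr s(1) by blast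
  show "P (Some x) (Some y) \<Longrightarrow> P (Some y) (Some z) \<Longrightarrow> P (Some x) (Some z)"
    using tr s by blast
  show "x \<noteq> y \<Longrightarrow> P (Some x) (Some y) \<or> P (Some y) (Some x)" using tot s(1,2) by blast
qed

lemma market_linD: "market D H Pd Ph \<Longrightarrow> d \<in> D \<Longrightarrow> linacc H (Pd d)"
  unfolding market_def using sl_linacc by blast
lemma market_linH: "market D H Pd Ph \<Longrightarrow> h \<in> H \<Longrightarrow> linacc D (Ph h)"
  unfolding market_def using sl_linacc by blast

definition rT :: "('a option \<Rightarrow> 'a option \<Rightarrow> bool) \<Rightarrow> 'a set \<Rightarrow> 'a option set" where
  "rT P S = Some ` {a\<in>S. P (Some a) None} \<union> {None}"

lemma rp_in: "x \<in> rT P S \<Longrightarrow> y \<in> rT P S \<Longrightarrow> restrict_pref P S x y = P x y"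
  unfolding restrict_pref_def rT_def Let_def by simp

lemma rp_left: "restrict_pref P S x y \<Longrightarrow> y \<in> rT P S \<Longrightarrow> x \<in> rT P S"
  unfolding restrict_pref_def rT_def Let_def by (auto split: if_splits)

lemma rT_Some: "Some a \<in> rT P S \<longleftrightarrow> a \<in> S \<and> P (Some a) None"
  unfolding rT_def by auto

lemma rT_None: "None \<in> rT P S"
  unfolding rT_def by auto

lemma rp_acc: "acc (restrict_pref P S) a \<longleftrightarrow> a \<in> S \<and> P (Some a) None"
  unfolding acc_def restrict_pref_def Let_def by auto

lemma rp_acc_T: "acc (restrict_pref P S) a \<longleftrightarrow> Some a \<in> rT P S"
  unfolding rp_acc rT_Some ..

lemma rp_linacc:
  assumes sl: "strict_linear_on (Some ` U \<union> {None}) P"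
  shows "linacc U (restrict_pref P S)"
proof -
  have l: "linacc U P" by (rule sl_linacc[OF sl])
  have T: "Some x \<in> rT P S" if "acc (restrict_pref P S) x" for x using that unfolding rp_acc_T .
  have a2: "acc P x" if "acc (restrict_pref P S) x" for x using that[unfolded rp_acc] unfolding acc_def by blast
  have irr: "\<not> restrict_pref P S (Some x) (Some x)" if "x \<in> U" "acc (restrict_pref P S) x" for x
    using linacc_irr[OF l that(1) a2[OF that(2)]] rp_in[OF T[OF that(2)] T[OF that(2)]] by simp
  have tr: "restrict_pref P S (Some x) (Some z)"
    if "x \<in> U" "y \<in> U" "z \<in> U" "acc (restrict_pref P S) x" "acc (restrict_pref P S) y" "acc (restrict_pref P S) z"
       "restrict_pref P S (Some x) (Some y)" "restrict_pref P S (Some y) (Some z)" for x y z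
  proof -
    have "P (Some x) (Some y)" "P (Some y) (Some z)"
      using that(7,8) rp_in[OF T[OF that(4)] T[OF that(5)]] rp_in[OF T[OF that(5)] T[OF that(6)]] by simp_all
    hence "P (Some x) (Some z)" using linacc_trans[OF l that(1-3) a2[OF that(4)] a2[OF that(5)] a2[OF that(6)]] by simp
    thus ?thesis using rp_in[OF T[OF that(4)] T[OF that(6)]] by simp
  qed
  have tot: "restrict_pref P S (Some x) (Some y) \<or> restrict_pref P S (Some y) (Some x)"
    if "x \<in> U" "y \<in> U" "acc (restrict_pref P S) x" "acc (restrict_pref P S) y" "x \<noteq> y" for x y
    using linacc_tot[OF l that(1,2) a2[OF that(3)] a2[OF that(4)] that(5)]
      rp_in[OF T[OF that(3)] T[OF that(4)]] rp_in[OF T[OF that(4)] T[OF that(3)]] by simp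
  show ?thesis unfolding linacc_def
    using irr tr tot by blast
qed

lemma pd_Some: "matching D H M \<Longrightarrow> pd M d = Some h \<longleftrightarrow> (d, h) \<in> M"
proof
  assume m: "matching D H M" and p: "pd M d = Some h"
  hence ex: "\<exists>h. (d, h) \<in> M" unfolding pd_def by (auto split: if_splits)
  hence "h = (THE h. (d, h) \<in> M)" using p unfolding pd_def by simp
  moreover obtain h0 where "(d, h0) \<in> M" using ex by blast
  moreover have "\<And>h'. (d, h') \<in> M \<Longrightarrow> h' = h0" using m \<open>(d, h0) \<in> M\<close> unfolding matching_def by blast
  ultimately show "(d, h) \<in> M" by (metis the_equality)
next
  assume m: "matching D H M" and dh: "(d, h) \<in> M"
  have eq: "\<And>h'. (d, h') \<in> M \<Longrightarrow> h' = h" using m dh unfolding matching_def by blast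
  have "(THE h. (d, h) \<in> M) = h" by (rule the_equality[where P="\<lambda>h. (d, h) \<in> M", OF dh eq])
  thus "pd M d = Some h" using dh unfolding pd_def by auto
qed

lemma ph_Some: "matching D H M \<Longrightarrow> ph M h = Some d \<longleftrightarrow> (d, h) \<in> M"
proof
  assume m: "matching D H M" and p: "ph M h = Some d"
  hence ex: "\<exists>d. (d, h) \<in> M" unfolding ph_def by (auto split: if_splits)
  hence "d = (THE d. (d, h) \<in> M)" using p unfolding ph_def by simp
  moreover obtain d0 where "(d0, h) \<in> M" using ex by blast
  moreover have "\<And>d'. (d', h) \<in> M \<Longrightarrow> d' = d0" using m \<open>(d0, h) \<in> M\<close> unfolding matching_def by blast
  ultimately show "(d, h) \<in> M" by (metis the_equality)
next
  assume m: "matching D H M" and dh: "(d, h) \<in> M"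
  have eq: "\<And>d'. (d', h) \<in> M \<Longrightarrow> d' = d" using m dh unfolding matching_def by blast
  have "(THE d. (d, h) \<in> M) = d" by (rule the_equality[where P="\<lambda>d. (d, h) \<in> M", OF dh eq])
  thus "ph M h = Some d" using dh unfolding ph_def by auto
qed

lemma pd_None: "pd M d = None \<longleftrightarrow> (\<forall>h. (d, h) \<notin> M)"
  unfolding pd_def by auto

lemma ph_None: "ph M h = None \<longleftrightarrow> (\<forall>d. (d, h) \<notin> M)"
  unfolding ph_def by auto

lemma c1_mem:
  assumes "linacc U P" "X \<subseteq> U" "finite X"
  shows "x \<in> choice P 1 X \<longleftrightarrow> x \<in> X \<and> acc P x \<and> (\<forall>y\<in>X. acc P y \<longrightarrow> \<not> P (Some y) (Some x))"
proof -
  have "rk P X x < 1 \<longleftrightarrow> (\<forall>y\<in>X. acc P y \<longrightarrow> \<not> P (Some y) (Some x))"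
    unfolding rk_def using assms(3) by auto
  thus ?thesis unfolding choice_alt[OF assms] by blast
qed

lemma c1_id:
  assumes "linacc U P" "X \<subseteq> U" "finite X" "\<forall>x\<in>X. acc P x" "\<forall>x\<in>X. \<forall>y\<in>X. x = y"
  shows "choice P 1 X = X"
proof
  show "choice P 1 X \<subseteq> X" by (rule choice_sub)
  show "X \<subseteq> choice P 1 X"
  proof
    fix x assume x: "x \<in> X"
    have xU: "x \<in> U" using x assms(2) by blast
    have xa: "acc P x" using x assms(4) by blast
    have ni: "\<not> P (Some x) (Some x)" by (rule linacc_irr[OF assms(1) xU xa])
    have "\<forall>y\<in>X. acc P y \<longrightarrow> \<not> P (Some y) (Some x)"
    proof (intro ballI impI)
      fix y assume "y \<in> X"
      hence "y = x" using assms(5) x by blast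
      thus "\<not> P (Some y) (Some x)" using ni by simp
    qed
    thus "x \<in> choice P 1 X" unfolding c1_mem[OF assms(1-3)] using x assms(4) by blast
  qed
qed

lemma dset_conv: "dset (converse X) a = hset X a" unfolding dset_def hset_def by simp
lemma hset_conv: "hset (converse X) a = dset X a" unfolding dset_def hset_def by simp

lemma ho_unique:
  assumes "hospital_optimal_ps D H Pd Ph \<iota> \<kappa> N1" "hospital_optimal_ps D H Pd Ph \<iota> \<kappa> N2"
  shows "N1 = N2"
proof -
  have p1: "pairwise_stable D H Pd Ph \<iota> \<kappa> N1" and p2: "pairwise_stable D H Pd Ph \<iota> \<kappa> N2"
    using assms unfolding hospital_optimal_ps_def by blast+
  have o1: "\<forall>h\<in>H. choice (Ph h) (\<iota> h) (hset N1 h \<union> hset N2 h) = hset N1 h"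
    using assms(1) p2 unfolding hospital_optimal_ps_def by blast
  have o2: "\<forall>h\<in>H. choice (Ph h) (\<iota> h) (hset N2 h \<union> hset N1 h) = hset N2 h"
    using assms(2) p1 unfolding hospital_optimal_ps_def by blast
  have eq: "hset N1 h = hset N2 h" if "h \<in> H" for h
  proof -
    have "choice (Ph h) (\<iota> h) (hset N1 h \<union> hset N2 h) = hset N1 h" using o1 that by blast
    moreover have "choice (Ph h) (\<iota> h) (hset N2 h \<union> hset N1 h) = hset N2 h" using o2 that by blast
    moreover have "hset N2 h \<union> hset N1 h = hset N1 h \<union> hset N2 h" by (rule Un_commute)
    ultimately show ?thesis by simp
  qed
  have s1: "N1 \<subseteq> D \<times> H" and s2: "N2 \<subseteq> D \<times> H"
    using ps_sub[OF p1] ps_sub[OF p2] by auto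
  show ?thesis
  proof (rule set_eqI)
    fix p show "p \<in> N1 \<longleftrightarrow> p \<in> N2"
    proof (cases p)
      case (Pair d h)
      show ?thesis
      proof (cases "h \<in> H")
        case True
        have "(d, h) \<in> N1 \<longleftrightarrow> (d, h) \<in> N2" using eq[OF True] unfolding hset_def by blast
        thus ?thesis using Pair by simp
      next
        case False thus ?thesis using Pair s1 s2 by blast
      qed
    qed
  qed
qed

lemma step1_props:
  assumes mk: "market D H Pd Ph"
  shows "pairwise_stable D H Pd Ph \<iota> \<kappa> (step1 D H Pd Ph \<iota> \<kappa>) \<and>
    (\<forall>k0 N. (\<forall>d\<in>D. k0 d \<le> \<kappa> d) \<longrightarrow> pairwise_stable D H Pd Ph \<iota> k0 N \<longrightarrow>
      (\<forall>h\<in>H. choice (Ph h) (\<iota> h) (hset (step1 D H Pd Ph \<iota> \<kappa>) h \<union> hset N h) = hset (step1 D H Pd Ph \<iota> \<kappa>) h))"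
proof -
  have fD: "finite D" and fH: "finite H" using mk unfolding market_def by blast+
  have l: "da D H Pd Ph"
    by (rule da.intro[OF fD fH market_linH[OF mk] market_linD[OF mk]])
  obtain \<nu> where ps: "pairwise_stable D H Pd Ph \<iota> \<kappa> \<nu>"
    and op: "\<forall>k0 N. (\<forall>d\<in>D. k0 d \<le> \<kappa> d) \<longrightarrow> pairwise_stable D H Pd Ph \<iota> k0 N \<longrightarrow>
        (\<forall>h\<in>H. choice (Ph h) (\<iota> h) (hset \<nu> h \<union> hset N h) = hset \<nu> h)"
    using da.da_exists[OF l, where io=\<iota> and ka=\<kappa>] by blast
  have ho: "hospital_optimal_ps D H Pd Ph \<iota> \<kappa> \<nu>"
    unfolding hospital_optimal_ps_def using ps op by blast
  have "step1 D H Pd Ph \<iota> \<kappa> = \<nu>"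
    unfolding step1_def by (rule the_equality[where P="hospital_optimal_ps D H Pd Ph \<iota> \<kappa>", OF ho ho_unique[OF _ ho]])
  thus ?thesis using ps op by simp
qed

lemma ps1_to_stable:
  fixes A :: "'d \<Rightarrow> 'h option \<Rightarrow> 'h option \<Rightarrow> bool" and B :: "'h \<Rightarrow> 'd option \<Rightarrow> 'd option \<Rightarrow> bool"
  assumes fD: "finite D" and fH: "finite H"
    and linA: "\<And>d. d \<in> D \<Longrightarrow> linacc H (A d)" and linB: "\<And>h. h \<in> H \<Longrightarrow> linacc D (B h)"
    and upA: "\<And>d h h0. d \<in> D \<Longrightarrow> A d (Some h) (Some h0) \<Longrightarrow> acc (A d) h0 \<Longrightarrow> acc (A d) h"
    and upB: "\<And>h d d0. h \<in> H \<Longrightarrow> B h (Some d) (Some d0) \<Longrightarrow> acc (B h) d0 \<Longrightarrow> acc (B h) d"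
    and ps: "pairwise_stable H D B A (\<lambda>_. 1) (\<lambda>_. 1) (converse M)"
  shows "matching D H M \<and> indiv_rational A B M \<and> stable D H A B M"
proof -
  have MDH: "M \<subseteq> D \<times> H" using ps_sub[OF ps] by auto
  have cd: "card (dset M d) \<le> 1" if "d \<in> D" for d
    using ps_card_h[OF ps that] unfolding hset_conv by simp
  have ch: "card (hset M h) \<le> 1" if "h \<in> H" for h
    using ps_card_d[OF ps that] unfolding dset_conv by simp
  have fdM: "finite (dset M d)" for d using finite_subset[OF _ fH, of "dset M d"] MDH unfolding dset_def by blast
  have fhM: "finite (hset M h)" for h using finite_subset[OF _ fD, of "hset M h"] MDH unfolding hset_def by blast
  have m: "matching D H M"
    unfolding matching_def
  proof (intro conjI allI impI)
    show "M \<subseteq> D \<times> H" by (rule MDH)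
  next
    fix d h h' assume a: "(d, h) \<in> M" "(d, h') \<in> M"
    have "d \<in> D" using a MDH by blast
    hence "\<forall>a\<in>dset M d. \<forall>b\<in>dset M d. a = b" using cd card_le_Suc0_iff_eq[OF fdM] by simp
    thus "h = h'" using a unfolding dset_def by blast
  next
    fix d d' h assume a: "(d, h) \<in> M" "(d', h) \<in> M"
    have "h \<in> H" using a MDH by blast
    hence "\<forall>a\<in>hset M h. \<forall>b\<in>hset M h. a = b" using ch card_le_Suc0_iff_eq[OF fhM] by simp
    thus "d = d'" using a unfolding hset_def by blast
  qed
  have irA: "acc (A d) h" and irB: "acc (B h) d" if "(d, h) \<in> M" for d h
  proof -
    have "(h, d) \<in> converse M" using that by simp
    from ps_mem[OF ps this] show "acc (A d) h" "acc (B h) d" by blast+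
  qed
  have ir: "indiv_rational A B M" unfolding indiv_rational_def using irA irB unfolding acc_def by blast
  have st: "\<not> blocks A B M d h" if dD: "d \<in> D" and hH: "h \<in> H" for d h
  proof
    assume bl: "blocks A B M d h"
    have b1: "A d (Some h) (pd M d)" and b2: "B h (Some d) (ph M h)" using bl unfolding blocks_def by blast+
    have la: "linacc H (A d)" by (rule linA[OF dD])
    have lb: "linacc D (B h)" by (rule linB[OF hH])
    have ha: "acc (A d) h"
    proof (cases "pd M d")
      case None thus ?thesis using b1 unfolding acc_def by simp
    next
      case (Some h0)
      hence "(d, h0) \<in> M" using pd_Some[OF m] by blast
      thus ?thesis using upA[OF dD] b1 Some irA by auto
    qed
    have da: "acc (B h) d"
    proof (cases "ph M h")
      case None thus ?thesis using b2 unfolding acc_def by simp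
    next
      case (Some d0)
      hence "(d0, h) \<in> M" using ph_Some[OF m] by blast
      thus ?thesis using upB[OF hH] b2 Some irB by auto
    qed
    have nM: "(d, h) \<notin> M"
    proof
      assume "(d, h) \<in> M"
      hence "pd M d = Some h" using pd_Some[OF m] by blast
      thus False using b1 linacc_irr[OF la hH ha] by simp
    qed
    have X1: "insert h (dset M d) \<subseteq> H" using hH MDH unfolding dset_def by blast
    have X2: "insert d (hset M h) \<subseteq> D" using dD MDH unfolding hset_def by blast
    have c1: "h \<in> choice (A d) 1 (insert h (dset M d))"
      unfolding c1_mem[OF la X1 finite_insert[THEN iffD2, OF fdM]]
    proof (intro conjI ballI impI)
      show "h \<in> insert h (dset M d)" by simp
      show "acc (A d) h" by (rule ha)
    next
      fix y assume y: "y \<in> insert h (dset M d)" and ya: "acc (A d) y"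
      show "\<not> A d (Some y) (Some h)"
      proof (cases "y = h")
        case True thus ?thesis using linacc_irr[OF la hH ha] by simp
      next
        case False
        hence "(d, y) \<in> M" using y unfolding dset_def by simp
        hence "pd M d = Some y" using pd_Some[OF m] by blast
        hence "A d (Some h) (Some y)" using b1 by simp
        moreover have "y \<in> H" using y X1 by blast
        ultimately show ?thesis using linacc_asym[OF la hH _ ha ya] by blast
      qed
    qed
    have c2: "d \<in> choice (B h) 1 (insert d (hset M h))"
      unfolding c1_mem[OF lb X2 finite_insert[THEN iffD2, OF fhM]]
    proof (intro conjI ballI impI)
      show "d \<in> insert d (hset M h)" by simp
      show "acc (B h) d" by (rule da)
    next
      fix y assume y: "y \<in> insert d (hset M h)" and ya: "acc (B h) y"
      show "\<not> B h (Some y) (Some d)"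
      proof (cases "y = d")
        case True thus ?thesis using linacc_irr[OF lb dD da] by simp
      next
        case False
        hence "(y, h) \<in> M" using y unfolding hset_def by simp
        hence "ph M h = Some y" using ph_Some[OF m] by blast
        hence "B h (Some d) (Some y)" using b2 by simp
        moreover have "y \<in> D" using y X2 by blast
        ultimately show ?thesis using linacc_asym[OF lb dD _ da ya] by blast
      qed
    qed
    have "(h, d) \<notin> converse M" using nM by simp
    hence "\<not> (d \<in> choice (B h) 1 (insert d (dset (converse M) h)) \<and> h \<in> choice (A d) 1 (insert h (hset (converse M) d)))"
      by (rule ps_nb[OF ps hH dD])
    thus False using c1 c2 unfolding dset_conv hset_conv by blast
  qed
  show ?thesis using m ir st unfolding stable_def by blast
qed

lemma stable_to_ps1:
  fixes A :: "'d \<Rightarrow> 'h option \<Rightarrow> 'h option \<Rightarrow> bool" and B :: "'h \<Rightarrow> 'd option \<Rightarrow> 'd option \<Rightarrow> bool"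
  assumes fD: "finite D" and fH: "finite H"
    and linA: "\<And>d. d \<in> D \<Longrightarrow> linacc H (A d)" and linB: "\<And>h. h \<in> H \<Longrightarrow> linacc D (B h)"
    and ir: "indiv_rational A B M" and st: "stable D H A B M"
  shows "pairwise_stable H D B A (\<lambda>_. 1) (\<lambda>_. 1) (converse M)"
proof -
  have m: "matching D H M" using st unfolding stable_def by blast
  have MDH: "M \<subseteq> D \<times> H" using m unfolding matching_def by blast
  have irA: "acc (A d) h" and irB: "acc (B h) d" if "(d, h) \<in> M" for d h
    using ir that unfolding indiv_rational_def acc_def by blast+
  have fdM: "finite (dset M d)" for d using finite_subset[OF _ fH, of "dset M d"] MDH unfolding dset_def by blast
  have fhM: "finite (hset M h)" for h using finite_subset[OF _ fD, of "hset M h"] MDH unfolding hset_def by blast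
  have dsub: "dset M d \<subseteq> H" for d using MDH unfolding dset_def by blast
  have hsub: "hset M h \<subseteq> D" for h using MDH unfolding hset_def by blast
  have du: "\<forall>a\<in>dset M d. \<forall>b\<in>dset M d. a = b" for d using m unfolding matching_def dset_def by blast
  have hu: "\<forall>a\<in>hset M h. \<forall>b\<in>hset M h. a = b" for h using m unfolding matching_def hset_def by blast
  show ?thesis
    unfolding pairwise_stable_def interview_matching_def dset_conv hset_conv
  proof (intro conjI ballI allI impI)
    show "converse M \<subseteq> H \<times> D" using MDH by blast
  next
    fix h assume "h \<in> H"
    show "card (hset M h) \<le> 1" using hu card_le_Suc0_iff_eq[OF fhM] by simp
  next
    fix d assume "d \<in> D"
    show "card (dset M d) \<le> 1" using du card_le_Suc0_iff_eq[OF fdM] by simp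
  next
    fix h assume hH: "h \<in> H"
    have "\<forall>x\<in>hset M h. acc (B h) x" using irB unfolding hset_def by blast
    thus "choice (B h) 1 (hset M h) = hset M h" by (rule c1_id[OF linB[OF hH] hsub fhM _ hu])
  next
    fix d assume dD: "d \<in> D"
    have "\<forall>x\<in>dset M d. acc (A d) x" using irA unfolding dset_def by blast
    thus "choice (A d) 1 (dset M d) = dset M d" by (rule c1_id[OF linA[OF dD] dsub fdM _ du])
  next
    fix h d assume hH: "h \<in> H" and dD: "d \<in> D" and nM: "(h, d) \<notin> converse M"
    have nM': "(d, h) \<notin> M" using nM by simp
    show "\<not> (d \<in> choice (B h) 1 (insert d (hset M h)) \<and> h \<in> choice (A d) 1 (insert h (dset M d)))"
    proof
      assume "d \<in> choice (B h) 1 (insert d (hset M h)) \<and> h \<in> choice (A d) 1 (insert h (dset M d))"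
      hence c2: "d \<in> choice (B h) 1 (insert d (hset M h))" and c1: "h \<in> choice (A d) 1 (insert h (dset M d))" by blast+
      have la: "linacc H (A d)" by (rule linA[OF dD])
      have lb: "linacc D (B h)" by (rule linB[OF hH])
      have X1: "insert h (dset M d) \<subseteq> H" using hH dsub by blast
      have X2: "insert d (hset M h) \<subseteq> D" using dD hsub by blast
      have c1': "acc (A d) h" "\<forall>y\<in>insert h (dset M d). acc (A d) y \<longrightarrow> \<not> A d (Some y) (Some h)"
        using c1 unfolding c1_mem[OF la X1 finite_insert[THEN iffD2, OF fdM]] by blast+
      have c2': "acc (B h) d" "\<forall>y\<in>insert d (hset M h). acc (B h) y \<longrightarrow> \<not> B h (Some y) (Some d)"
        using c2 unfolding c1_mem[OF lb X2 finite_insert[THEN iffD2, OF fhM]] by blast+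
      have b1: "A d (Some h) (pd M d)"
      proof (cases "pd M d")
        case None thus ?thesis using c1'(1) unfolding acc_def by simp
      next
        case (Some h0)
        hence dh0: "(d, h0) \<in> M" using pd_Some[OF m] by blast
        have ne: "h \<noteq> h0" using dh0 nM' by blast
        have h0H: "h0 \<in> H" using subsetD[OF MDH dh0] by simp
        have h0a: "acc (A d) h0" by (rule irA[OF dh0])
        have h0X: "h0 \<in> insert h (dset M d)" using dh0 unfolding dset_def by simp
        have "\<not> A d (Some h0) (Some h)" using c1'(2) h0X h0a by blast
        moreover have "A d (Some h) (Some h0) \<or> A d (Some h0) (Some h)"
          by (rule linacc_tot[OF la hH h0H c1'(1) h0a ne])
        ultimately show ?thesis using Some by simp
      qed
      have b2: "B h (Some d) (ph M h)"
      proof (cases "ph M h")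
        case None thus ?thesis using c2'(1) unfolding acc_def by simp
      next
        case (Some d0)
        hence dh0: "(d0, h) \<in> M" using ph_Some[OF m] by blast
        have ne: "d \<noteq> d0" using dh0 nM' by blast
        have d0D: "d0 \<in> D" using subsetD[OF MDH dh0] by simp
        have d0a: "acc (B h) d0" by (rule irB[OF dh0])
        have d0X: "d0 \<in> insert d (hset M h)" using dh0 unfolding hset_def by simp
        have "\<not> B h (Some d0) (Some d)" using c2'(2) d0X d0a by blast
        moreover have "B h (Some d) (Some d0) \<or> B h (Some d0) (Some d)"
          by (rule linacc_tot[OF lb dD d0D c2'(1) d0a ne])
        ultimately show ?thesis using Some by simp
      qed
      have "blocks A B M d h" unfolding blocks_def using b1 b2 by blast
      thus False using st dD hH unfolding stable_def by blast
    qed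
  qed
qed

lemma dos_exists:
  fixes A :: "'d \<Rightarrow> 'h option \<Rightarrow> 'h option \<Rightarrow> bool" and B :: "'h \<Rightarrow> 'd option \<Rightarrow> 'd option \<Rightarrow> bool"
  assumes fD: "finite D" and fH: "finite H"
    and linA: "\<And>d. d \<in> D \<Longrightarrow> linacc H (A d)" and linB: "\<And>h. h \<in> H \<Longrightarrow> linacc D (B h)"
    and upA: "\<And>d h h0. d \<in> D \<Longrightarrow> A d (Some h) (Some h0) \<Longrightarrow> acc (A d) h0 \<Longrightarrow> acc (A d) h"
    and upB: "\<And>h d d0. h \<in> H \<Longrightarrow> B h (Some d) (Some d0) \<Longrightarrow> acc (B h) d0 \<Longrightarrow> acc (B h) d"
  shows "\<exists>M. doctor_optimal_stable D H A B M"
proof -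
  have l: "da H D B A" by (rule da.intro[OF fH fD linA linB])
  obtain N' where psN: "pairwise_stable H D B A (\<lambda>_::'d. 1::nat) (\<lambda>_::'h. 1::nat) N'"
    and op: "\<forall>kk N. (\<forall>h\<in>H. kk h \<le> (1::nat)) \<longrightarrow> pairwise_stable H D B A (\<lambda>_::'d. 1::nat) kk N \<longrightarrow>
        (\<forall>d\<in>D. choice (A d) 1 (hset N' d \<union> hset N d) = hset N' d)"
    using da.da_exists[OF l, where io="\<lambda>_::'d. 1::nat" and ka="\<lambda>_::'h. 1::nat"] by blast
  define M where "M = converse N'"
  have NM: "N' = converse M" unfolding M_def by simp
  have ps: "pairwise_stable H D B A (\<lambda>_. 1) (\<lambda>_. 1) (converse M)" using psN NM by simp
  have mis: "matching D H M \<and> indiv_rational A B M \<and> stable D H A B M"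
    by (rule ps1_to_stable[OF fD fH linA linB upA upB ps])
  hence m: "matching D H M" and ir: "indiv_rational A B M" and st: "stable D H A B M" by blast+
  have MDH: "M \<subseteq> D \<times> H" using m unfolding matching_def by blast
  have irA: "acc (A d) h" if "(d, h) \<in> M" for d h
    using ir that unfolding indiv_rational_def acc_def by blast
  have optM: "pd M d = pd M2 d \<or> A d (pd M d) (pd M2 d)"
    if ir2: "indiv_rational A B M2" and st2: "stable D H A B M2" and dD: "d \<in> D" for M2 d
  proof -
    have m2: "matching D H M2" using st2 unfolding stable_def by blast
    have M2DH: "M2 \<subseteq> D \<times> H" using m2 unfolding matching_def by blast
    have irA2: "acc (A d) h" if "(d, h) \<in> M2" for h
      using ir2 that unfolding indiv_rational_def acc_def by blast
    have ps2: "pairwise_stable H D B A (\<lambda>_. 1) (\<lambda>_. 1) (converse M2)"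
      by (rule stable_to_ps1[OF fD fH linA linB ir2 st2])
    have k: "\<And>h. h \<in> H \<Longrightarrow> (\<lambda>_::'h. 1::nat) h \<le> 1" by simp
    have "choice (A d) 1 (hset N' d \<union> hset (converse M2) d) = hset N' d"
      by (rule op[rule_format, where kk="\<lambda>_::'h. 1::nat", OF k ps2 dD])
    hence ch: "choice (A d) 1 (dset M d \<union> dset M2 d) = dset M d" unfolding NM hset_conv .
    have la: "linacc H (A d)" by (rule linA[OF dD])
    have XH: "dset M d \<union> dset M2 d \<subseteq> H" using MDH M2DH unfolding dset_def by blast
    have fX: "finite (dset M d \<union> dset M2 d)" using finite_subset[OF XH fH] .
    show ?thesis
    proof (cases "pd M2 d")
      case None
      show ?thesis
      proof (cases "pd M d")
        case None2: None thus ?thesis using None by simp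
      next
        case (Some h1)
        hence "(d, h1) \<in> M" using pd_Some[OF m] by blast
        hence "acc (A d) h1" by (rule irA)
        thus ?thesis using Some None unfolding acc_def by simp
      qed
    next
      case (Some h2)
      hence dh2: "(d, h2) \<in> M2" using pd_Some[OF m2] by blast
      have h2a: "acc (A d) h2" by (rule irA2[OF dh2])
      have h2H: "h2 \<in> H" using subsetD[OF M2DH dh2] by simp
      have h2X: "h2 \<in> dset M d \<union> dset M2 d" by (rule UnI2) (simp add: dset_def dh2)
      show ?thesis
      proof (cases "pd M d")
        case None
        hence "dset M d = {}" unfolding pd_None dset_def by simp
        hence "h2 \<notin> choice (A d) 1 (dset M d \<union> dset M2 d)" using ch by simp
        moreover have "\<forall>y\<in>dset M d \<union> dset M2 d. acc (A d) y \<longrightarrow> \<not> A d (Some y) (Some h2)"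
        proof (intro ballI impI)
          fix y assume y: "y \<in> dset M d \<union> dset M2 d" "acc (A d) y"
          have "y \<in> dset M2 d" using y \<open>dset M d = {}\<close> by blast
          hence "(d, y) \<in> M2" unfolding dset_def by simp
          hence "y = h2" using dh2 m2 unfolding matching_def by blast
          thus "\<not> A d (Some y) (Some h2)" using linacc_irr[OF la h2H h2a] by simp
        qed
        ultimately show ?thesis using h2X h2a unfolding c1_mem[OF la XH fX] by blast
      next
        case (Some h1)
        hence dh1: "(d, h1) \<in> M" using pd_Some[OF m] by blast
        show ?thesis
        proof (cases "h1 = h2")
          case True thus ?thesis using Some \<open>pd M2 d = Some h2\<close> by simp
        next
          case False
          have "dset M d = {h1}" using dh1 m unfolding matching_def dset_def by blast
          hence "h2 \<notin> choice (A d) 1 (dset M d \<union> dset M2 d)" using ch False by simp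
          then obtain y where y: "y \<in> dset M d \<union> dset M2 d" "acc (A d) y" "A d (Some y) (Some h2)"
            using h2X h2a unfolding c1_mem[OF la XH fX] by blast
          have "y \<noteq> h2" using y(3) linacc_irr[OF la h2H h2a] by blast
          moreover have "y \<in> dset M2 d \<Longrightarrow> y = h2" using dh2 m2 unfolding matching_def dset_def by blast
          ultimately have "y = h1" using y(1) \<open>dset M d = {h1}\<close> by blast
          thus ?thesis using y(3) Some \<open>pd M2 d = Some h2\<close> by simp
        qed
      qed
    qed
  qed
  have "doctor_optimal_stable D H A B M"
    unfolding doctor_optimal_stable_def using ir st optM by blast
  thus ?thesis by blast
qed

lemma dos_unique:
  fixes A :: "'d \<Rightarrow> 'h option \<Rightarrow> 'h option \<Rightarrow> bool" and B :: "'h \<Rightarrow> 'd option \<Rightarrow> 'd option \<Rightarrow> bool"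
  assumes asym: "\<And>d x y. d \<in> D \<Longrightarrow> x \<in> insert None (Some ` {h\<in>H. acc (A d) h}) \<Longrightarrow>
        y \<in> insert None (Some ` {h\<in>H. acc (A d) h}) \<Longrightarrow> A d x y \<Longrightarrow> \<not> A d y x"
    and M1: "doctor_optimal_stable D H A B M1" and M2: "doctor_optimal_stable D H A B M2"
  shows "M1 = M2"
proof -
  have ir1: "indiv_rational A B M1" and st1: "stable D H A B M1"
    and ir2: "indiv_rational A B M2" and st2: "stable D H A B M2"
    using M1 M2 unfolding doctor_optimal_stable_def by blast+
  have m1: "matching D H M1" and m2: "matching D H M2" using st1 st2 unfolding stable_def by blast+
  have o1: "\<forall>d\<in>D. pd M1 d = pd M2 d \<or> A d (pd M1 d) (pd M2 d)"
    using M1 ir2 st2 unfolding doctor_optimal_stable_def by blast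
  have o2: "\<forall>d\<in>D. pd M2 d = pd M1 d \<or> A d (pd M2 d) (pd M1 d)"
    using M2 ir1 st1 unfolding doctor_optimal_stable_def by blast
  have inV: "pd M d \<in> insert None (Some ` {h\<in>H. acc (A d) h})"
    if "matching D H M" "indiv_rational A B M" for M d
  proof (cases "pd M d")
    case None thus ?thesis by simp
  next
    case (Some h)
    hence "(d, h) \<in> M" using pd_Some[OF that(1)] by blast
    hence "h \<in> H" "acc (A d) h" using that unfolding matching_def indiv_rational_def acc_def by blast+
    thus ?thesis using Some by blast
  qed
  have eq: "pd M1 d = pd M2 d" if dD: "d \<in> D" for d
  proof -
    have a: "pd M1 d = pd M2 d \<or> A d (pd M1 d) (pd M2 d)" using o1 dD by blast
    have b: "pd M2 d = pd M1 d \<or> A d (pd M2 d) (pd M1 d)" using o2 dD by blast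
    have c: "A d (pd M1 d) (pd M2 d) \<Longrightarrow> \<not> A d (pd M2 d) (pd M1 d)"
      by (rule asym[OF dD inV[OF m1 ir1] inV[OF m2 ir2]])
    show ?thesis using a b c by auto
  qed
  show ?thesis
  proof (rule set_eqI)
    fix p show "p \<in> M1 \<longleftrightarrow> p \<in> M2"
    proof (cases p)
      case (Pair d h)
      have "(d, h) \<in> M1 \<longleftrightarrow> (d, h) \<in> M2"
      proof
        assume a: "(d, h) \<in> M1"
        hence "d \<in> D" using m1 unfolding matching_def by blast
        moreover have "pd M1 d = Some h" using a pd_Some[OF m1] by blast
        ultimately have "pd M2 d = Some h" using eq by simp
        thus "(d, h) \<in> M2" using pd_Some[OF m2] by blast
      next
        assume a: "(d, h) \<in> M2"
        hence "d \<in> D" using m2 unfolding matching_def by blast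
        moreover have "pd M2 d = Some h" using a pd_Some[OF m2] by blast
        ultimately have "pd M1 d = Some h" using eq by simp
        thus "(d, h) \<in> M1" using pd_Some[OF m1] by blast
      qed
      thus ?thesis using Pair by simp
    qed
  qed
qed

abbreviation "rp \<equiv> restrict_pref"

lemma slo_irr: "strict_linear_on A P \<Longrightarrow> x \<in> A \<Longrightarrow> \<not> P x x"
  unfolding strict_linear_on_def by blast
lemma slo_trans: "strict_linear_on A P \<Longrightarrow> x \<in> A \<Longrightarrow> y \<in> A \<Longrightarrow> z \<in> A \<Longrightarrow> P x y \<Longrightarrow> P y z \<Longrightarrow> P x z"
  unfolding strict_linear_on_def by blast
lemma slo_tot: "strict_linear_on A P \<Longrightarrow> x \<in> A \<Longrightarrow> y \<in> A \<Longrightarrow> x \<noteq> y \<Longrightarrow> P x y \<or> P y x"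
  unfolding strict_linear_on_def by blast
lemma slo_asym: "strict_linear_on A P \<Longrightarrow> x \<in> A \<Longrightarrow> y \<in> A \<Longrightarrow> P x y \<Longrightarrow> \<not> P y x"
  unfolding strict_linear_on_def by blast

lemma market_slD: "market D H Pd Ph \<Longrightarrow> d \<in> D \<Longrightarrow> strict_linear_on (Some ` H \<union> {None}) (Pd d)"
  unfolding market_def by blast
lemma market_slH: "market D H Pd Ph \<Longrightarrow> h \<in> H \<Longrightarrow> strict_linear_on (Some ` D \<union> {None}) (Ph h)"
  unfolding market_def by blast

lemma pd_in: "matching D H M \<Longrightarrow> pd M d \<in> Some ` H \<union> {None}"
proof (cases "pd M d")
  case (Some h)
  assume m: "matching D H M"
  hence "(d, h) \<in> M" using Some pd_Some[OF m] by blast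
  hence "h \<in> H" using m unfolding matching_def by blast
  thus ?thesis using Some by blast
qed simp

lemma ph_in: "matching D H M \<Longrightarrow> ph M h \<in> Some ` D \<union> {None}"
proof (cases "ph M h")
  case (Some d)
  assume m: "matching D H M"
  hence "(d, h) \<in> M" using Some ph_Some[OF m] by blast
  hence "d \<in> D" using m unfolding matching_def by blast
  thus ?thesis using Some by blast
qed simp

lemma pd_rT:
  assumes m: "matching D H M" and ir: "indiv_rational (\<lambda>d. rp (Pd d) (S d)) B M"
  shows "pd M d \<in> rT (Pd d) (S d)"
proof (cases "pd M d")
  case None thus ?thesis using rT_None by simp
next
  case (Some h)
  hence "(d, h) \<in> M" using pd_Some[OF m] by blast
  hence "acc (rp (Pd d) (S d)) h" using ir unfolding indiv_rational_def acc_def by blast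
  thus ?thesis using Some unfolding rp_acc_T by simp
qed

lemma ph_rT:
  assumes m: "matching D H M" and ir: "indiv_rational A (\<lambda>h. rp (Ph h) (S h)) M"
  shows "ph M h \<in> rT (Ph h) (S h)"
proof (cases "ph M h")
  case None thus ?thesis using rT_None by simp
next
  case (Some d)
  hence "(d, h) \<in> M" using ph_Some[OF m] by blast
  hence "acc (rp (Ph h) (S h)) d" using ir unfolding indiv_rational_def acc_def by blast
  thus ?thesis using Some unfolding rp_acc_T by simp
qed

lemma pd_cong: "(\<And>h. (d, h) \<in> M1 \<longleftrightarrow> (d, h) \<in> M2) \<Longrightarrow> pd M1 d = pd M2 d"
  unfolding pd_def by simp
lemma ph_cong: "(\<And>d. (d, h) \<in> M1 \<longleftrightarrow> (d, h) \<in> M2) \<Longrightarrow> ph M1 h = ph M2 h"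
  unfolding ph_def by simp

lemma ir_rp:
  assumes "indiv_rational (\<lambda>d. rp (Pd d) (dset N d)) (\<lambda>h. rp (Ph h) (hset N h)) M" "(d, h) \<in> M"
  shows "(d, h) \<in> N" "Pd d (Some h) None" "Ph h (Some d) None"
proof -
  have "acc (rp (Pd d) (dset N d)) h" "acc (rp (Ph h) (hset N h)) d"
    using assms unfolding indiv_rational_def acc_def by blast+
  thus "(d, h) \<in> N" "Pd d (Some h) None" "Ph h (Some d) None"
    unfolding rp_acc dset_def hset_def by simp_all
qed

lemma lemL:
  assumes mk: "market D H Pd Ph" and psv: "pairwise_stable D H Pd Ph \<iota> \<kappa> \<nu>"
    and psv': "pairwise_stable D H Pd Ph \<iota> \<kappa>' \<nu>'"
    and BC: "\<forall>h\<in>H. choice (Ph h) (\<iota> h) (hset \<nu>' h \<union> hset \<nu> h) = hset \<nu>' h"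
    and a: "(d, h) \<in> \<nu>" "(d', h) \<in> \<nu>'" "Ph h (Some d) (Some d')"
  shows "(d, h) \<in> \<nu>'"
proof -
  have hH: "h \<in> H" and dD: "d \<in> D" and da: "acc (Ph h) d" using ps_mem[OF psv a(1)] by blast+
  have d'D: "d' \<in> D" and d'a: "acc (Ph h) d'" using ps_mem[OF psv' a(2)] by blast+
  have lin: "linacc D (Ph h)" by (rule market_linH[OF mk hH])
  let ?S = "hset \<nu>' h \<union> hset \<nu> h"
  have SD: "?S \<subseteq> D" using ps_hsub[OF psv] ps_hsub[OF psv'] by blast
  have fS: "finite ?S" using finite_subset[OF SD] mk unfolding market_def by blast
  have d'S: "d' \<in> choice (Ph h) (\<iota> h) ?S" using BC hH a(2) unfolding hset_def by blast
  have r1: "rk (Ph h) ?S d' < \<iota> h" using d'S unfolding choice_alt[OF lin SD fS] by blast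
  have dS: "d \<in> ?S" using a(1) unfolding hset_def by blast
  have "rk (Ph h) ?S d < rk (Ph h) ?S d'" by (rule rk_strict[OF lin SD fS dS da d'D d'a a(3)])
  hence "d \<in> choice (Ph h) (\<iota> h) ?S" unfolding choice_alt[OF lin SD fS] using dS da r1 by simp
  hence "d \<in> hset \<nu>' h" using BC hH by simp
  thus ?thesis unfolding hset_def by simp
qed

lemma rp_accI: "h \<in> S \<Longrightarrow> P (Some h) None \<Longrightarrow> rp P S (Some h) None"
  using rp_acc[of P S h] unfolding acc_def by simp

lemma dos_rp:
  assumes mk: "market D H Pd Ph"
  shows "doctor_optimal_stable D H (\<lambda>d. rp (Pd d) (dset N d)) (\<lambda>h. rp (Ph h) (hset N h))
     (THE M. doctor_optimal_stable D H (\<lambda>d. rp (Pd d) (dset N d)) (\<lambda>h. rp (Ph h) (hset N h)) M)"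
proof -
  have fD: "finite D" and fH: "finite H" using mk unfolding market_def by blast+
  have linA: "linacc H (rp (Pd d) (dset N d))" if "d \<in> D" for d
    by (rule rp_linacc[OF market_slD[OF mk that]])
  have linB: "linacc D (rp (Ph h) (hset N h))" if "h \<in> H" for h
    by (rule rp_linacc[OF market_slH[OF mk that]])
  have upA: "acc (rp (Pd d) (dset N d)) h"
    if "d \<in> D" "rp (Pd d) (dset N d) (Some h) (Some h0)" "acc (rp (Pd d) (dset N d)) h0" for d h h0
    using rp_left[OF that(2)] that(3) unfolding rp_acc_T by blast
  have upB: "acc (rp (Ph h) (hset N h)) d"
    if "h \<in> H" "rp (Ph h) (hset N h) (Some d) (Some d0)" "acc (rp (Ph h) (hset N h)) d0" for h d d0
    using rp_left[OF that(2)] that(3) unfolding rp_acc_T by blast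
  have "\<exists>M. doctor_optimal_stable D H (\<lambda>d. rp (Pd d) (dset N d)) (\<lambda>h. rp (Ph h) (hset N h)) M"
  proof (rule dos_exists[OF fD fH])
    show "\<And>d. d \<in> D \<Longrightarrow> linacc H (rp (Pd d) (dset N d))" by (rule linA)
    show "\<And>h. h \<in> H \<Longrightarrow> linacc D (rp (Ph h) (hset N h))" by (rule linB)
    show "\<And>d h h0. d \<in> D \<Longrightarrow> rp (Pd d) (dset N d) (Some h) (Some h0) \<Longrightarrow> acc (rp (Pd d) (dset N d)) h0
      \<Longrightarrow> acc (rp (Pd d) (dset N d)) h" by (rule upA)
    show "\<And>h d d0. h \<in> H \<Longrightarrow> rp (Ph h) (hset N h) (Some d) (Some d0) \<Longrightarrow> acc (rp (Ph h) (hset N h)) d0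
      \<Longrightarrow> acc (rp (Ph h) (hset N h)) d" by (rule upB)
  qed
  then obtain M where M: "doctor_optimal_stable D H (\<lambda>d. rp (Pd d) (dset N d)) (\<lambda>h. rp (Ph h) (hset N h)) M"
    by blast
  have asym: "\<not> rp (Pd d) (dset N d) y x"
    if dD: "d \<in> D" and x: "x \<in> insert None (Some ` {h\<in>H. acc (rp (Pd d) (dset N d)) h})"
      and y: "y \<in> insert None (Some ` {h\<in>H. acc (rp (Pd d) (dset N d)) h})"
      and xy: "rp (Pd d) (dset N d) x y" for d x y
  proof -
    have xT: "x \<in> rT (Pd d) (dset N d)" using x rT_None[of "Pd d" "dset N d"] unfolding rp_acc_T by auto
    have yT: "y \<in> rT (Pd d) (dset N d)" using y rT_None[of "Pd d" "dset N d"] unfolding rp_acc_T by auto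
    have xV: "x \<in> Some ` H \<union> {None}" and yV: "y \<in> Some ` H \<union> {None}" using x y by auto
    have "Pd d x y" using xy rp_in[OF xT yT] by simp
    hence "\<not> Pd d y x" by (rule slo_asym[OF market_slD[OF mk dD] xV yV])
    thus ?thesis using rp_in[OF yT xT] by simp
  qed
  have uq: "M2 = M" if "doctor_optimal_stable D H (\<lambda>d. rp (Pd d) (dset N d)) (\<lambda>h. rp (Ph h) (hset N h)) M2" for M2
    by (rule dos_unique[where A="\<lambda>d. rp (Pd d) (dset N d)" and B="\<lambda>h. rp (Ph h) (hset N h)", OF asym that M])
  show ?thesis
    by (rule theI[where P="doctor_optimal_stable D H (\<lambda>d. rp (Pd d) (dset N d)) (\<lambda>h. rp (Ph h) (hset N h))", OF M uq])
qed

lemma core: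
  fixes D :: "'d set" and H :: "'h set"
  assumes mk: "market D H Pd Ph"
    and psv: "pairwise_stable D H Pd Ph \<iota> \<kappa> \<nu>"
    and psv': "pairwise_stable D H Pd Ph \<iota> \<kappa>' \<nu>'"
    and BC: "\<forall>h\<in>H. choice (Ph h) (\<iota> h) (hset \<nu>' h \<union> hset \<nu> h) = hset \<nu>' h"
    and dos: "doctor_optimal_stable D H (\<lambda>d. rp (Pd d) (dset \<nu> d)) (\<lambda>h. rp (Ph h) (hset \<nu> h)) \<mu>"
    and dos': "doctor_optimal_stable D H (\<lambda>d. rp (Pd d) (dset \<nu>' d)) (\<lambda>h. rp (Ph h) (hset \<nu>' h)) \<mu>'"
    and st: "stable D H Pd Ph \<mu>"
  shows "\<forall>d\<in>D. pd \<mu> d = pd \<mu>' d \<or> Pd d (pd \<mu> d) (pd \<mu>' d)"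
proof -
  have fD: "finite D" using mk unfolding market_def by blast
  have ir: "indiv_rational (\<lambda>d. rp (Pd d) (dset \<nu> d)) (\<lambda>h. rp (Ph h) (hset \<nu> h)) \<mu>"
    and stR: "stable D H (\<lambda>d. rp (Pd d) (dset \<nu> d)) (\<lambda>h. rp (Ph h) (hset \<nu> h)) \<mu>"
    and opt: "\<And>M'. indiv_rational (\<lambda>d. rp (Pd d) (dset \<nu> d)) (\<lambda>h. rp (Ph h) (hset \<nu> h)) M' \<Longrightarrow>
        stable D H (\<lambda>d. rp (Pd d) (dset \<nu> d)) (\<lambda>h. rp (Ph h) (hset \<nu> h)) M' \<Longrightarrow>
        \<forall>d\<in>D. pd \<mu> d = pd M' d \<or> rp (Pd d) (dset \<nu> d) (pd \<mu> d) (pd M' d)"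
    using dos unfolding doctor_optimal_stable_def by blast+
  have ir': "indiv_rational (\<lambda>d. rp (Pd d) (dset \<nu>' d)) (\<lambda>h. rp (Ph h) (hset \<nu>' h)) \<mu>'"
    and stR': "stable D H (\<lambda>d. rp (Pd d) (dset \<nu>' d)) (\<lambda>h. rp (Ph h) (hset \<nu>' h)) \<mu>'"
    using dos' unfolding doctor_optimal_stable_def by blast+
  have m: "matching D H \<mu>" using st unfolding stable_def by blast
  have m': "matching D H \<mu>'" using stR' unfolding stable_def by blast
  have mDH: "\<mu> \<subseteq> D \<times> H" using m unfolding matching_def by blast
  have m'DH: "\<mu>' \<subseteq> D \<times> H" using m' unfolding matching_def by blast
  have mf: "h = h'" if "(d, h) \<in> \<mu>" "(d, h') \<in> \<mu>" for d h h' using m that unfolding matching_def by blast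
  have mi: "d = d'" if "(d, h) \<in> \<mu>" "(d', h) \<in> \<mu>" for d d' h using m that unfolding matching_def by blast
  have mf': "h = h'" if "(d, h) \<in> \<mu>'" "(d, h') \<in> \<mu>'" for d h h' using m' that unfolding matching_def by blast
  have mi': "d = d'" if "(d, h) \<in> \<mu>'" "(d', h) \<in> \<mu>'" for d d' h using m' that unfolding matching_def by blast
  note irm = ir_rp[OF ir] and irm' = ir_rp[OF ir']
  have stT: "\<not> (Pd d (Some h) (pd \<mu> d) \<and> Ph h (Some d) (ph \<mu> h))" if "d \<in> D" "h \<in> H" for d h
    using st that unfolding stable_def blocks_def by blast
  have stT': "\<not> (rp (Pd d) (dset \<nu>' d) (Some h) (pd \<mu>' d) \<and> rp (Ph h) (hset \<nu>' h) (Some d) (ph \<mu>' h))"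
    if "d \<in> D" "h \<in> H" for d h
    using stR' that unfolding stable_def blocks_def by blast
  have L: "(d, h) \<in> \<nu>'" if "(d, h) \<in> \<nu>" "(d', h) \<in> \<nu>'" "Ph h (Some d) (Some d')" for d d' h
    by (rule lemL[OF mk psv psv' BC that])
  define Dp where "Dp = {d\<in>D. Pd d (pd \<mu>' d) (pd \<mu> d)}"
  have DpD: "Dp \<subseteq> D" unfolding Dp_def by blast
  have fDp: "finite Dp" using finite_subset[OF DpD fD] .
  have dpref: "Pd d (pd \<mu>' d) (pd \<mu> d)" if "d \<in> Dp" for d using that unfolding Dp_def by blast
  have step1: "\<exists>h d2. (d, h) \<in> \<mu>' \<and> (d2, h) \<in> \<mu> \<and> d2 \<in> Dp" if dDp: "d \<in> Dp" for d
  proof -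
    have dD: "d \<in> D" using dDp DpD by blast
    have pref: "Pd d (pd \<mu>' d) (pd \<mu> d)" by (rule dpref[OF dDp])
    have sld: "strict_linear_on (Some ` H \<union> {None}) (Pd d)" by (rule market_slD[OF mk dD])
    have "pd \<mu>' d \<noteq> None"
    proof
      assume N: "pd \<mu>' d = None"
      show False
      proof (cases "pd \<mu> d")
        case None
        thus False using pref N slo_irr[OF sld, of None] by simp
      next
        case (Some h0)
        hence "(d, h0) \<in> \<mu>" using pd_Some[OF m] by blast
        hence a: "Pd d (Some h0) None" using irm by blast
        have h0H: "h0 \<in> H" using \<open>(d, h0) \<in> \<mu>\<close> mDH by blast
        have "Pd d None (Some h0)" using pref N Some by simp
        thus False using slo_asym[OF sld _ _ a] h0H by blast
      qed
    qed
    then obtain h where h: "pd \<mu>' d = Some h" by blast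
    have dh': "(d, h) \<in> \<mu>'" using h pd_Some[OF m'] by blast
    have hH: "h \<in> H" using dh' m'DH by blast
    have b1: "Pd d (Some h) (pd \<mu> d)" using pref h by simp
    have nph: "\<not> Ph h (Some d) (ph \<mu> h)" using stT[OF dD hH] b1 by blast
    have sdh: "Ph h (Some d) None" using irm'(3)[OF dh'] .
    have "ph \<mu> h \<noteq> None"
    proof
      assume "ph \<mu> h = None"
      thus False using nph sdh by simp
    qed
    then obtain d2 where d2: "ph \<mu> h = Some d2" by blast
    have d2h: "(d2, h) \<in> \<mu>" using d2 ph_Some[OF m] by blast
    have d2D: "d2 \<in> D" using d2h mDH by blast
    have slh: "strict_linear_on (Some ` D \<union> {None}) (Ph h)" by (rule market_slH[OF mk hH])
    have "d2 \<noteq> d"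
    proof
      assume "d2 = d"
      hence "pd \<mu> d = Some h" using d2h pd_Some[OF m] by blast
      thus False using b1 slo_irr[OF sld, of "Some h"] hH by simp
    qed
    have "Ph h (Some d2) (Some d)"
    proof -
      have "Ph h (Some d2) (Some d) \<or> Ph h (Some d) (Some d2)"
        using slo_tot[OF slh, of "Some d2" "Some d"] d2D dD \<open>d2 \<noteq> d\<close> by blast
      thus ?thesis using nph d2 by simp
    qed
    hence d2v': "(d2, h) \<in> \<nu>'" using L[OF irm(1)[OF d2h] irm'(1)[OF dh']] by blast
    have phm': "ph \<mu>' h = Some d" using dh' ph_Some[OF m'] by blast
    have T1: "Some d2 \<in> rT (Ph h) (hset \<nu>' h)" unfolding rT_Some hset_def using d2v' irm(3)[OF d2h] by simp
    have T2: "Some d \<in> rT (Ph h) (hset \<nu>' h)" unfolding rT_Some hset_def using irm'(1,3)[OF dh'] by simp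
    have "rp (Ph h) (hset \<nu>' h) (Some d2) (ph \<mu>' h)"
      using phm' rp_in[OF T1 T2] \<open>Ph h (Some d2) (Some d)\<close> by simp
    hence nA: "\<not> rp (Pd d2) (dset \<nu>' d2) (Some h) (pd \<mu>' d2)" using stT'[OF d2D hH] by blast
    have T3: "Some h \<in> rT (Pd d2) (dset \<nu>' d2)" unfolding rT_Some dset_def using d2v' irm(2)[OF d2h] by simp
    have T4: "pd \<mu>' d2 \<in> rT (Pd d2) (dset \<nu>' d2)" by (rule pd_rT[OF m' ir'])
    have n2: "\<not> Pd d2 (Some h) (pd \<mu>' d2)" using nA rp_in[OF T3 T4] by simp
    have "pd \<mu>' d2 \<noteq> Some h"
    proof
      assume "pd \<mu>' d2 = Some h"
      hence "(d2, h) \<in> \<mu>'" using pd_Some[OF m'] by blast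
      thus False using mi'[OF _ dh'] \<open>d2 \<noteq> d\<close> by blast
    qed
    moreover have "strict_linear_on (Some ` H \<union> {None}) (Pd d2)" by (rule market_slD[OF mk d2D])
    moreover have "pd \<mu>' d2 \<in> Some ` H \<union> {None}" by (rule pd_in[OF m'])
    ultimately have "Pd d2 (pd \<mu>' d2) (Some h)" using slo_tot[of _ "Pd d2" "pd \<mu>' d2" "Some h"] n2 hH by blast
    moreover have "pd \<mu> d2 = Some h" using d2h pd_Some[OF m] by blast
    ultimately have "d2 \<in> Dp" unfolding Dp_def using d2D by simp
    thus ?thesis using dh' d2h by blast
  qed
  define f where "f d = the (ph \<mu> (the (pd \<mu>' d)))" for d
  have fprop: "\<exists>h. (d, h) \<in> \<mu>' \<and> (f d, h) \<in> \<mu> \<and> f d \<in> Dp" if dDp: "d \<in> Dp" for d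
  proof -
    obtain h d2 where a: "(d, h) \<in> \<mu>'" "(d2, h) \<in> \<mu>" "d2 \<in> Dp" using step1[OF dDp] by blast
    have "pd \<mu>' d = Some h" using a(1) pd_Some[OF m'] by blast
    moreover have "ph \<mu> h = Some d2" using a(2) ph_Some[OF m] by blast
    ultimately have "f d = d2" unfolding f_def by simp
    thus ?thesis using a by blast
  qed
  have inj: "inj_on f Dp"
  proof (rule inj_onI)
    fix d e assume d: "d \<in> Dp" and e: "e \<in> Dp" and fe: "f d = f e"
    obtain hd where hd: "(d, hd) \<in> \<mu>'" "(f d, hd) \<in> \<mu>" using fprop[OF d] by blast
    obtain he where he: "(e, he) \<in> \<mu>'" "(f e, he) \<in> \<mu>" using fprop[OF e] by blast
    have "hd = he" using mf[OF hd(2)] he(2) fe by simp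
    thus "d = e" using mi'[OF hd(1)] he(1) by simp
  qed
  have fsub: "f ` Dp \<subseteq> Dp" using fprop by blast
  have surj: "f ` Dp = Dp"
    by (rule card_subset_eq[OF fDp fsub]) (simp add: card_image[OF inj])
  have K1: "\<exists>d\<in>Dp. (d, h) \<in> \<mu>'" if eDp: "e \<in> Dp" and eh: "(e, h) \<in> \<mu>" for e h
  proof -
    obtain d where d: "d \<in> Dp" "e = f d" using eDp surj by blast
    obtain h' where h': "(d, h') \<in> \<mu>'" "(f d, h') \<in> \<mu>" using fprop[OF d(1)] by blast
    have "h' = h" using mf[OF h'(2)] eh d(2) by simp
    thus ?thesis using d h' by blast
  qed
  have K2: "\<exists>e\<in>Dp. (e, h) \<in> \<mu>" if dDp: "d \<in> Dp" and dh: "(d, h) \<in> \<mu>'" for d h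
  proof -
    obtain h' where h': "(d, h') \<in> \<mu>'" "(f d, h') \<in> \<mu>" "f d \<in> Dp" using fprop[OF dDp] by blast
    have "h' = h" using mf'[OF h'(1) dh] .
    thus ?thesis using h' by blast
  qed
  have Dpm: "\<exists>h. (d, h) \<in> \<mu>" if dDp: "d \<in> Dp" for d
  proof -
    obtain d0 where d0: "d0 \<in> Dp" "d = f d0" using dDp surj by blast
    thus ?thesis using fprop[OF d0(1)] by blast
  qed
  show ?thesis
  proof (cases "Dp = {}")
    case True
    show ?thesis
    proof
      fix d assume dD: "d \<in> D"
      have nd: "\<not> Pd d (pd \<mu>' d) (pd \<mu> d)" using True dD unfolding Dp_def by blast
      have sld: "strict_linear_on (Some ` H \<union> {None}) (Pd d)" by (rule market_slD[OF mk dD])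
      show "pd \<mu> d = pd \<mu>' d \<or> Pd d (pd \<mu> d) (pd \<mu>' d)"
        using slo_tot[OF sld pd_in[OF m] pd_in[OF m']] nd by blast
    qed
  next
    case False
    define \<sigma> where "\<sigma> = {p\<in>\<mu>'. fst p \<in> Dp} \<union> {p\<in>\<mu>. fst p \<notin> Dp}"
    have memS: "(d, h) \<in> \<sigma> \<longleftrightarrow> ((d, h) \<in> \<mu>' \<and> d \<in> Dp) \<or> ((d, h) \<in> \<mu> \<and> d \<notin> Dp)" for d h
      unfolding \<sigma>_def by auto
    have pdS1: "pd \<sigma> d = pd \<mu>' d" if "d \<in> Dp" for d
      by (rule pd_cong) (use that memS in blast)
    have pdS2: "pd \<sigma> d = pd \<mu> d" if "d \<notin> Dp" for d
      by (rule pd_cong) (use that memS in blast)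
    have phS1: "ph \<sigma> h = ph \<mu>' h" if exh: "\<exists>e\<in>Dp. (e, h) \<in> \<mu>" for h
    proof (rule ph_cong)
      fix d
      obtain e where e: "e \<in> Dp" "(e, h) \<in> \<mu>" using exh by blast
      show "(d, h) \<in> \<sigma> \<longleftrightarrow> (d, h) \<in> \<mu>'"
      proof
        assume "(d, h) \<in> \<sigma>"
        thus "(d, h) \<in> \<mu>'" unfolding memS using mi[OF _ e(2)] e(1) by blast
      next
        assume a: "(d, h) \<in> \<mu>'"
        obtain d0 where "d0 \<in> Dp" "(d0, h) \<in> \<mu>'" using K1[OF e] by blast
        hence "d \<in> Dp" using mi'[OF a] by blast
        thus "(d, h) \<in> \<sigma>" unfolding memS using a by blast
      qed
    qed
    have phS2: "ph \<sigma> h = ph \<mu> h" if "\<not> (\<exists>e\<in>Dp. (e, h) \<in> \<mu>)" for h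
    proof (rule ph_cong)
      fix d
      show "(d, h) \<in> \<sigma> \<longleftrightarrow> (d, h) \<in> \<mu>"
      proof
        assume "(d, h) \<in> \<sigma>"
        thus "(d, h) \<in> \<mu>" unfolding memS using K2 that by blast
      next
        assume a: "(d, h) \<in> \<mu>"
        hence "d \<notin> Dp" using that by blast
        thus "(d, h) \<in> \<sigma>" unfolding memS using a by blast
      qed
    qed
    have mS: "matching D H \<sigma>"
      unfolding matching_def
    proof (intro conjI allI impI)
      show "\<sigma> \<subseteq> D \<times> H" using mDH m'DH unfolding \<sigma>_def by blast
    next
      fix d h h' assume a: "(d, h) \<in> \<sigma>" "(d, h') \<in> \<sigma>"
      show "h = h'"
      proof (cases "d \<in> Dp")
        case True thus ?thesis using a memS mf' by blast
      next
        case False thus ?thesis using a memS mf by blast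
      qed
    next
      fix d d' h assume a: "(d, h) \<in> \<sigma>" "(d', h) \<in> \<sigma>"
      show "d = d'"
      proof (cases "d \<in> Dp")
        case True
        hence dh: "(d, h) \<in> \<mu>'" using a(1) memS by blast
        obtain e where e: "e \<in> Dp" "(e, h) \<in> \<mu>" using K2[OF True dh] by blast
        show ?thesis
        proof (cases "d' \<in> Dp")
          case True thus ?thesis using a(2) memS mi'[OF dh] by blast
        next
          case False
          hence "(d', h) \<in> \<mu>" using a(2) memS by blast
          hence "d' = e" using mi e(2) by blast
          thus ?thesis using e(1) False by blast
        qed
      next
        case False
        hence dh: "(d, h) \<in> \<mu>" using a(1) memS by blast
        show ?thesis
        proof (cases "d' \<in> Dp")
          case False thus ?thesis using a(2) memS mi[OF dh] by blast
        next
          case True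
          hence d'h: "(d', h) \<in> \<mu>'" using a(2) memS by blast
          obtain e where e: "e \<in> Dp" "(e, h) \<in> \<mu>" using K2[OF True d'h] by blast
          have "d = e" using mi[OF dh e(2)] .
          thus ?thesis using e(1) \<open>d \<notin> Dp\<close> by blast
        qed
      qed
    qed
    have inv: "(d, h) \<in> \<nu>" if dDp: "d \<in> Dp" and dh: "(d, h) \<in> \<mu>'" for d h
    proof (rule ccontr)
      assume nv: "(d, h) \<notin> \<nu>"
      have dD: "d \<in> D" using dDp DpD by blast
      have hH: "h \<in> H" using dh m'DH by blast
      have dhv': "(d, h) \<in> \<nu>'" using irm'(1)[OF dh] .
      have ha: "acc (Pd d) h" using irm'(2)[OF dh] unfolding acc_def .
      have da: "acc (Ph h) d" using irm'(3)[OF dh] unfolding acc_def .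
      have nb: "\<not> (h \<in> choice (Pd d) (\<kappa> d) (insert h (dset \<nu> d)) \<and> d \<in> choice (Ph h) (\<iota> h) (insert d (hset \<nu> h)))"
        by (rule ps_nb[OF psv dD hH nv])
      show False
      proof (cases "d \<in> choice (Ph h) (\<iota> h) (insert d (hset \<nu> h))")
        case False
        have lin: "linacc D (Ph h)" by (rule market_linH[OF mk hH])
        let ?X = "insert d (hset \<nu> h)"
        let ?S = "hset \<nu>' h \<union> hset \<nu> h"
        have XD: "?X \<subseteq> D" using dD ps_hsub[OF psv] by blast
        have SD: "?S \<subseteq> D" using ps_hsub[OF psv] ps_hsub[OF psv'] by blast
        have fS: "finite ?S" using finite_subset[OF SD fD] .
        have fX: "finite ?X" using finite_subset[OF XD fD] .
        have XS: "?X \<subseteq> ?S" using dhv' unfolding hset_def by blast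
        have r1: "\<iota> h \<le> rk (Ph h) ?X d" using False da unfolding choice_alt[OF lin XD fX] by simp
        have "d \<in> choice (Ph h) (\<iota> h) ?S" using BC hH dhv' unfolding hset_def by simp
        hence r2: "rk (Ph h) ?S d < \<iota> h" unfolding choice_alt[OF lin SD fS] by simp
        have "rk (Ph h) ?X d \<le> rk (Ph h) ?S d" by (rule rk_mono[OF XS fS])
        thus False using r1 r2 by simp
      next
        case True
        hence nh: "h \<notin> choice (Pd d) (\<kappa> d) (insert h (dset \<nu> d))" using nb by blast
        have lin: "linacc H (Pd d)" by (rule market_linD[OF mk dD])
        have fH: "finite H" using mk unfolding market_def by blast
        let ?X = "insert h (dset \<nu> d)"
        have XH: "?X \<subseteq> H" using hH ps_dsub[OF psv] by blast
        have fX: "finite ?X" using finite_subset[OF XH fH] .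
        have dvH: "dset \<nu> d \<subseteq> H" by (rule ps_dsub[OF psv])
        have fdv: "finite (dset \<nu> d)" using finite_subset[OF dvH fH] .
        have r1: "\<kappa> d \<le> rk (Pd d) ?X h" using nh ha unfolding choice_alt[OF lin XH fX] by simp
        let ?B = "{y\<in>?X. acc (Pd d) y \<and> Pd d (Some y) (Some h)}"
        have Bsub: "?B \<subseteq> dset \<nu> d" using linacc_irr[OF lin hH ha] by blast
        have "card (dset \<nu> d) \<le> \<kappa> d" by (rule ps_card_d[OF psv dD])
        hence "card (dset \<nu> d) \<le> card ?B" using r1 unfolding rk_def by simp
        moreover have "card ?B \<le> card (dset \<nu> d)" by (rule card_mono[OF fdv Bsub])
        ultimately have Beq: "?B = dset \<nu> d" using card_subset_eq[OF fdv Bsub] by simp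
        obtain h5 where h5: "(d, h5) \<in> \<mu>" using Dpm[OF dDp] by blast
        have "h5 \<in> dset \<nu> d" using irm(1)[OF h5] unfolding dset_def by simp
        hence p5: "Pd d (Some h5) (Some h)" using Beq by blast
        have "pd \<mu>' d = Some h" using dh pd_Some[OF m'] by blast
        moreover have "pd \<mu> d = Some h5" using h5 pd_Some[OF m] by blast
        ultimately have p6: "Pd d (Some h) (Some h5)" using dpref[OF dDp] by simp
        have h5H: "h5 \<in> H" using h5 mDH by blast
        show False using slo_asym[OF market_slD[OF mk dD], of "Some h" "Some h5"] p5 p6 hH h5H by blast
      qed
    qed
    have irS: "indiv_rational (\<lambda>d. rp (Pd d) (dset \<nu> d)) (\<lambda>h. rp (Ph h) (hset \<nu> h)) \<sigma>"
      unfolding indiv_rational_def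
    proof (intro ballI, clarify)
      fix d h assume a: "(d, h) \<in> \<sigma>"
      show "rp (Pd d) (dset \<nu> d) (Some h) None \<and> rp (Ph h) (hset \<nu> h) (Some d) None"
      proof (cases "d \<in> Dp")
        case True
        hence dh: "(d, h) \<in> \<mu>'" using a memS by blast
        have dv: "(d, h) \<in> \<nu>" by (rule inv[OF True dh])
        show ?thesis using rp_accI[of h "dset \<nu> d" "Pd d"] rp_accI[of d "hset \<nu> h" "Ph h"]
          dv irm'(2,3)[OF dh] unfolding dset_def hset_def by simp
      next
        case False
        hence dh: "(d, h) \<in> \<mu>" using a memS by blast
        show ?thesis using ir dh unfolding indiv_rational_def by blast
      qed
    qed
    have stS: "stable D H (\<lambda>d. rp (Pd d) (dset \<nu> d)) (\<lambda>h. rp (Ph h) (hset \<nu> h)) \<sigma>"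
      unfolding stable_def
    proof (intro conjI ballI)
      show "matching D H \<sigma>" by (rule mS)
    next
      fix d h assume dD: "d \<in> D" and hH: "h \<in> H"
      show "\<not> blocks (\<lambda>d. rp (Pd d) (dset \<nu> d)) (\<lambda>h. rp (Ph h) (hset \<nu> h)) \<sigma> d h"
      proof
        assume "blocks (\<lambda>d. rp (Pd d) (dset \<nu> d)) (\<lambda>h. rp (Ph h) (hset \<nu> h)) \<sigma> d h"
        hence bl1: "rp (Pd d) (dset \<nu> d) (Some h) (pd \<sigma> d)" and bl2: "rp (Ph h) (hset \<nu> h) (Some d) (ph \<sigma> h)"
          unfolding blocks_def by simp_all
        have sld: "strict_linear_on (Some ` H \<union> {None}) (Pd d)" by (rule market_slD[OF mk dD])
        have slh: "strict_linear_on (Some ` D \<union> {None}) (Ph h)" by (rule market_slH[OF mk hH])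
        have Td: "pd \<sigma> d \<in> rT (Pd d) (dset \<nu> d)" by (rule pd_rT[OF mS irS])
        have Th: "ph \<sigma> h \<in> rT (Ph h) (hset \<nu> h)" by (rule ph_rT[OF mS irS])
        have Sh: "Some h \<in> rT (Pd d) (dset \<nu> d)" by (rule rp_left[OF bl1 Td])
        have Sd: "Some d \<in> rT (Ph h) (hset \<nu> h)" by (rule rp_left[OF bl2 Th])
        have p1: "Pd d (Some h) (pd \<sigma> d)" using bl1 rp_in[OF Sh Td] by simp
        have p2: "Ph h (Some d) (ph \<sigma> h)" using bl2 rp_in[OF Sd Th] by simp
        have dhv: "(d, h) \<in> \<nu>" using Sh unfolding rT_Some dset_def by simp
        have hacc: "Pd d (Some h) None" using Sh unfolding rT_Some by simp
        have dacc: "Ph h (Some d) None" using Sd unfolding rT_Some by simp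
        have hV: "Some h \<in> Some ` H \<union> {None}" using hH by blast
        have dV: "Some d \<in> Some ` D \<union> {None}" using dD by blast
        have p3: "Pd d (Some h) (pd \<mu> d)"
        proof (cases "d \<in> Dp")
          case True
          hence "Pd d (Some h) (pd \<mu>' d)" using p1 pdS1 by simp
          thus ?thesis using slo_trans[OF sld hV pd_in[OF m'] pd_in[OF m]] dpref[OF True] by blast
        next
          case False thus ?thesis using p1 pdS2 by simp
        qed
        have nbm: "\<not> Ph h (Some d) (ph \<mu> h)" using stT[OF dD hH] p3 by blast
        have ex: "\<exists>e\<in>Dp. (e, h) \<in> \<mu>"
        proof (rule ccontr)
          assume "\<not> (\<exists>e\<in>Dp. (e, h) \<in> \<mu>)"
          hence "ph \<sigma> h = ph \<mu> h" by (rule phS2)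
          thus False using p2 nbm by simp
        qed
        then obtain e where e: "e \<in> Dp" "(e, h) \<in> \<mu>" by blast
        obtain d0 where d0: "d0 \<in> Dp" "(d0, h) \<in> \<mu>'" using K1[OF e] by blast
        have phm': "ph \<mu>' h = Some d0" using d0(2) ph_Some[OF m'] by blast
        have p4: "Ph h (Some d) (Some d0)" using p2 phS1[OF ex] phm' by simp
        have dhv': "(d, h) \<in> \<nu>'" by (rule L[OF dhv irm'(1)[OF d0(2)] p4])
        have T1: "Some d \<in> rT (Ph h) (hset \<nu>' h)" unfolding rT_Some hset_def using dhv' dacc by simp
        have T2: "Some d0 \<in> rT (Ph h) (hset \<nu>' h)" unfolding rT_Some hset_def using irm'(1,3)[OF d0(2)] by simp
        have "rp (Ph h) (hset \<nu>' h) (Some d) (ph \<mu>' h)" using phm' rp_in[OF T1 T2] p4 by simp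
        hence nA: "\<not> rp (Pd d) (dset \<nu>' d) (Some h) (pd \<mu>' d)" using stT'[OF dD hH] by blast
        have T3: "Some h \<in> rT (Pd d) (dset \<nu>' d)" unfolding rT_Some dset_def using dhv' hacc by simp
        have T4: "pd \<mu>' d \<in> rT (Pd d) (dset \<nu>' d)" by (rule pd_rT[OF m' ir'])
        have n2: "\<not> Pd d (Some h) (pd \<mu>' d)" using nA rp_in[OF T3 T4] by simp
        have ne: "pd \<mu>' d \<noteq> Some h"
        proof
          assume "pd \<mu>' d = Some h"
          hence "(d, h) \<in> \<mu>'" using pd_Some[OF m'] by blast
          hence "d = d0" using mi'[OF _ d0(2)] by blast
          thus False using p4 slo_irr[OF slh dV] by simp
        qed
        have p5: "Pd d (pd \<mu>' d) (Some h)"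
          using slo_tot[OF sld pd_in[OF m'] hV ne] n2 by blast
        show False
        proof (cases "d \<in> Dp")
          case True
          hence "Pd d (Some h) (pd \<mu>' d)" using p1 pdS1 by simp
          thus False using n2 by simp
        next
          case False
          have "Pd d (pd \<mu>' d) (pd \<mu> d)"
            using slo_trans[OF sld pd_in[OF m'] hV pd_in[OF m] p5 p3] .
          thus False using False dD unfolding Dp_def by blast
        qed
      qed
    qed
    obtain d where dDp: "d \<in> Dp" using False by blast
    have dD: "d \<in> D" using dDp DpD by blast
    have sld: "strict_linear_on (Some ` H \<union> {None}) (Pd d)" by (rule market_slD[OF mk dD])
    have o: "pd \<mu> d = pd \<sigma> d \<or> rp (Pd d) (dset \<nu> d) (pd \<mu> d) (pd \<sigma> d)"
      using opt[OF irS stS] dD by blast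
    have T1: "pd \<mu> d \<in> rT (Pd d) (dset \<nu> d)" by (rule pd_rT[OF m ir])
    have T2: "pd \<sigma> d \<in> rT (Pd d) (dset \<nu> d)" by (rule pd_rT[OF mS irS])
    have "pd \<mu> d = pd \<mu>' d \<or> Pd d (pd \<mu> d) (pd \<mu>' d)"
      using o rp_in[OF T1 T2] pdS1[OF dDp] by simp
    moreover have dp: "Pd d (pd \<mu>' d) (pd \<mu> d)" by (rule dpref[OF dDp])
    moreover have i1: "\<not> Pd d (pd \<mu> d) (pd \<mu> d)" by (rule slo_irr[OF sld pd_in[OF m]])
    moreover have a1: "\<not> Pd d (pd \<mu> d) (pd \<mu>' d)" by (rule slo_asym[OF sld pd_in[OF m'] pd_in[OF m] dp])
    ultimately have False by auto
    thus ?thesis ..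
  qed
qed

theorem theorem1:
  fixes D :: "'d set" and H :: "'h set"
    and Pd :: "'d \<Rightarrow> 'h option \<Rightarrow> 'h option \<Rightarrow> bool"
    and Ph :: "'h \<Rightarrow> 'd option \<Rightarrow> 'd option \<Rightarrow> bool"
    and \<iota> :: "'h \<Rightarrow> nat" and \<kappa> \<kappa>' :: "'d \<Rightarrow> nat"
  assumes "market D H Pd Ph"
    and "adequate D H Pd Ph \<iota> \<kappa>"
    and "\<forall>d\<in>D. \<kappa>' d \<ge> \<kappa> d"
  shows "\<forall>d\<in>D. pd (ik_matching D H Pd Ph \<iota> \<kappa>) d = pd (ik_matching D H Pd Ph \<iota> \<kappa>') d
            \<or> Pd d (pd (ik_matching D H Pd Ph \<iota> \<kappa>) d) (pd (ik_matching D H Pd Ph \<iota> \<kappa>') d)"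
proof -
  note mk = assms(1)
  define \<nu> where "\<nu> = step1 D H Pd Ph \<iota> \<kappa>"
  define \<nu>' where "\<nu>' = step1 D H Pd Ph \<iota> \<kappa>'"
  have s: "pairwise_stable D H Pd Ph \<iota> \<kappa> \<nu>"
    using step1_props[OF mk, where \<iota>=\<iota> and \<kappa>=\<kappa>] unfolding \<nu>_def by blast
  have s': "pairwise_stable D H Pd Ph \<iota> \<kappa>' \<nu>'"
    and o': "\<forall>k0 N. (\<forall>d\<in>D. k0 d \<le> \<kappa>' d) \<longrightarrow> pairwise_stable D H Pd Ph \<iota> k0 N \<longrightarrow>
      (\<forall>h\<in>H. choice (Ph h) (\<iota> h) (hset \<nu>' h \<union> hset N h) = hset \<nu>' h)"
    using step1_props[OF mk, where \<iota>=\<iota> and \<kappa>=\<kappa>'] unfolding \<nu>'_def by blast+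
  have BC: "\<forall>h\<in>H. choice (Ph h) (\<iota> h) (hset \<nu>' h \<union> hset \<nu> h) = hset \<nu>' h"
    using o' assms(3) s by blast
  have ik1: "ik_matching D H Pd Ph \<iota> \<kappa> =
      (THE M. doctor_optimal_stable D H (\<lambda>d. rp (Pd d) (dset \<nu> d)) (\<lambda>h. rp (Ph h) (hset \<nu> h)) M)"
    unfolding ik_matching_def Let_def \<nu>_def ..
  have ik2: "ik_matching D H Pd Ph \<iota> \<kappa>' =
      (THE M. doctor_optimal_stable D H (\<lambda>d. rp (Pd d) (dset \<nu>' d)) (\<lambda>h. rp (Ph h) (hset \<nu>' h)) M)"
    unfolding ik_matching_def Let_def \<nu>'_def ..
  have dos: "doctor_optimal_stable D H (\<lambda>d. rp (Pd d) (dset \<nu> d)) (\<lambda>h. rp (Ph h) (hset \<nu> h))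
      (ik_matching D H Pd Ph \<iota> \<kappa>)"
    unfolding ik1 by (rule dos_rp[OF mk])
  have dos': "doctor_optimal_stable D H (\<lambda>d. rp (Pd d) (dset \<nu>' d)) (\<lambda>h. rp (Ph h) (hset \<nu>' h))
      (ik_matching D H Pd Ph \<iota> \<kappa>')"
    unfolding ik2 by (rule dos_rp[OF mk])
  have st: "stable D H Pd Ph (ik_matching D H Pd Ph \<iota> \<kappa>)"
    using assms(2) unfolding adequate_def .
  show ?thesis by (rule core[OF mk s s' BC dos dos' st])
qed


end
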